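(* Let $\pi':U^+\to U^+/(z')$ be the canonical map. The center of $U^+/(z')$ is the polynomial algebra $\Bbbk[\pi'(z)]$ in one variable.
   Context: $\Bbbk$ is an algebraically closed field of characteristic zero and $q\in\Bbbk^\times$ is not a root of unity. $U^+$ is the $\Bbbk$-algebra generated by $e_1,e_2$ with relations (S1) $e_1^2e_2-(q^2+q^{-2})e_1e_2e_1+e_2e_1^2=0$ and (S2) $e_2^3e_1-(q^2+1+q^{-2})e_2^2e_1e_2+(q^2+1+q^{-2})e_2e_1e_2^2-e_1e_2^3=0$. Set $e_3=e_1e_2-q^2e_2e_1$, $z=e_2e_3-q^2e_3e_2$, $w=e_2e_3-e_3e_2$, $z'=e_1w-q^{-4}we_1$; $(z')$ is the two-sided ideal generated by $z'$. *)

theory Defs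
  imports "HOL-Computational_Algebra.Polynomial"
begin

text \<open>Free associative algebra on two generators over a field, realised as
  finitely supported coefficient functions on words over the alphabet {G1,G2}.\<close>

datatype gen = G1 | G2

type_synonym 'k nc = "gen list \<Rightarrow> 'k"

definition nc_carrier :: "('k::field) nc set" where
  "nc_carrier = {f. finite {w. f w \<noteq> 0}}"

definition nc_zero :: "('k::field) nc" where "nc_zero = (\<lambda>w. 0)"
definition nc_one :: "('k::field) nc" where "nc_one = (\<lambda>w. if w = [] then 1 else 0)"
definition nc_add :: "('k::field) nc \<Rightarrow> 'k nc \<Rightarrow> 'k nc" (infixl "\<oplus>" 65)
  where "f \<oplus> g = (\<lambda>w. f w + g w)"
definition nc_sub :: "('k::field) nc \<Rightarrow> 'k nc \<Rightarrow> 'k nc" (infixl "\<ominus>" 65)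
  where "f \<ominus> g = (\<lambda>w. f w - g w)"
definition nc_smul :: "'k::field \<Rightarrow> 'k nc \<Rightarrow> 'k nc" (infixr "\<cdot>" 75)
  where "c \<cdot> f = (\<lambda>w. c * f w)"
definition nc_mul :: "('k::field) nc \<Rightarrow> 'k nc \<Rightarrow> 'k nc" (infixl "\<otimes>" 70)
  where "f \<otimes> g = (\<lambda>w. \<Sum>i\<le>length w. f (take i w) * g (drop i w))"

primrec nc_pow :: "('k::field) nc \<Rightarrow> nat \<Rightarrow> 'k nc" where
  "nc_pow f 0 = nc_one"
| "nc_pow f (Suc n) = nc_pow f n \<otimes> f"

definition gen_elt :: "gen \<Rightarrow> ('k::field) nc" where
  "gen_elt g = (\<lambda>w. if w = [g] then 1 else 0)"

definition nc_peval :: "('k::field) poly \<Rightarrow> 'k nc \<Rightarrow> 'k nc" where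
  "nc_peval p x = (\<lambda>w. \<Sum>i\<le>degree p. coeff p i * nc_pow x i w)"

inductive_set nc_ideal :: "('k::field) nc set \<Rightarrow> 'k nc set" for S where
  zero: "nc_zero \<in> nc_ideal S"
| gen: "s \<in> S \<Longrightarrow> a \<in> nc_carrier \<Longrightarrow> b \<in> nc_carrier \<Longrightarrow> a \<otimes> s \<otimes> b \<in> nc_ideal S"
| add: "x \<in> nc_ideal S \<Longrightarrow> y \<in> nc_ideal S \<Longrightarrow> x \<oplus> y \<in> nc_ideal S"

definition e1 :: "('k::field) nc" where "e1 = gen_elt G1"
definition e2 :: "('k::field) nc" where "e2 = gen_elt G2"

definition S1 :: "'k::field \<Rightarrow> 'k nc" where
  "S1 q = (e1 \<otimes> e1 \<otimes> e2) \<ominus> ((q^2 + inverse q ^ 2) \<cdot> (e1 \<otimes> e2 \<otimes> e1)) \<oplus> (e2 \<otimes> e1 \<otimes> e1)"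

definition S2 :: "'k::field \<Rightarrow> 'k nc" where
  "S2 q = (e2 \<otimes> e2 \<otimes> e2 \<otimes> e1)
          \<ominus> ((q^2 + 1 + inverse q ^ 2) \<cdot> (e2 \<otimes> e2 \<otimes> e1 \<otimes> e2))
          \<oplus> ((q^2 + 1 + inverse q ^ 2) \<cdot> (e2 \<otimes> e1 \<otimes> e2 \<otimes> e2))
          \<ominus> (e1 \<otimes> e2 \<otimes> e2 \<otimes> e2)"

definition e3 :: "'k::field \<Rightarrow> 'k nc" where
  "e3 q = (e1 \<otimes> e2) \<ominus> (q^2 \<cdot> (e2 \<otimes> e1))"

definition zz :: "'k::field \<Rightarrow> 'k nc" where
  "zz q = (e2 \<otimes> e3 q) \<ominus> (q^2 \<cdot> (e3 q \<otimes> e2))"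

definition ww :: "'k::field \<Rightarrow> 'k nc" where
  "ww q = (e2 \<otimes> e3 q) \<ominus> (e3 q \<otimes> e2)"

definition zprime :: "'k::field \<Rightarrow> 'k nc" where
  "zprime q = (e1 \<otimes> ww q) \<ominus> (inverse q ^ 4 \<cdot> (ww q \<otimes> e1))"

text \<open>U^+/(z') = free algebra modulo the ideal generated by (S1), (S2) and z'.\<close>
definition Iq :: "'k::field \<Rightarrow> 'k nc set" where
  "Iq q = nc_ideal {S1 q, S2 q, zprime q}"

end

theory Submission
  imports Defs
begin

lemma nc_mul_assoc: "(f \<otimes> g) \<otimes> h = f \<otimes> (g \<otimes> h)"
proof
  fix w :: "gen list"
  define n where "n = length w"
  define F where "F = (\<lambda>j l. f (take j w) * g (take l (drop j w)) * h (drop (j+l) w))"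
  have L: "((f \<otimes> g) \<otimes> h) w = (\<Sum>k\<le>n. \<Sum>j\<le>k. F j (k - j))"
    unfolding nc_mul_def n_def F_def
    by (auto simp: sum_distrib_right min_def take_drop intro!: sum.cong)
  have R: "(f \<otimes> (g \<otimes> h)) w = (\<Sum>j\<le>n. \<Sum>l\<le>n - j. F j l)"
    unfolding nc_mul_def n_def F_def
    by (auto simp: sum_distrib_left mult.assoc add.commute intro!: sum.cong)
  have "(\<Sum>j\<le>n. \<Sum>l\<le>n - j. F j l) = (\<Sum>(j,l)\<in>{(j,l). j+l \<le> n}. F j l)"
  proof -
    have "{(j,l). j+l \<le> n} = Sigma {..n} (\<lambda>j. {..n-j})" by auto
    then show ?thesis by (simp add: sum.Sigma)
  qed
  also have "\<dots> = (\<Sum>k\<le>n. \<Sum>j\<le>k. F j (k - j))"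
    by (rule sum.triangle_reindex_eq)
  finally show "((f \<otimes> g) \<otimes> h) w = (f \<otimes> (g \<otimes> h)) w" using L R by simp
qed

lemma nc_mul_distrib_left: "f \<otimes> (g \<oplus> h) = (f \<otimes> g) \<oplus> (f \<otimes> h)"
  by (auto simp: nc_mul_def nc_add_def distrib_left sum.distrib)

lemma nc_mul_distrib_right: "(f \<oplus> g) \<otimes> h = (f \<otimes> h) \<oplus> (g \<otimes> h)"
  by (auto simp: nc_mul_def nc_add_def distrib_right sum.distrib)

lemma nc_one_mul: "nc_one \<otimes> f = f"
proof
  fix w :: "gen list"
  have "(nc_one \<otimes> f) w = (\<Sum>i\<le>length w. if i = 0 then f w else 0)"
    unfolding nc_mul_def nc_one_def
    by (rule sum.cong) auto
  then show "(nc_one \<otimes> f) w = f w" by simp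
qed

lemma nc_mul_one: "f \<otimes> nc_one = f"
proof
  fix w :: "gen list"
  have "(f \<otimes> nc_one) w = (\<Sum>i\<le>length w. if i = length w then f w else 0)"
    unfolding nc_mul_def nc_one_def
    by (rule sum.cong) auto
  then show "(f \<otimes> nc_one) w = f w" by simp
qed

lemma nc_mul_zero: "f \<otimes> nc_zero = nc_zero" "nc_zero \<otimes> f = nc_zero"
  by (auto simp: nc_mul_def nc_zero_def)

lemma carrier_mul:
  assumes "f \<in> nc_carrier" "g \<in> nc_carrier"
  shows "f \<otimes> g \<in> nc_carrier"
proof -
  let ?F = "{w. f w \<noteq> 0}" and ?G = "{w. g w \<noteq> 0}"
  have "{w. (f \<otimes> g) w \<noteq> 0} \<subseteq> (\<lambda>(u,v). u @ v) ` (?F \<times> ?G)"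
  proof
    fix w assume "w \<in> {w. (f \<otimes> g) w \<noteq> 0}"
    then obtain i where "f (take i w) * g (drop i w) \<noteq> 0"
      unfolding nc_mul_def by (auto elim: sum.not_neutral_contains_not_neutral)
    then show "w \<in> (\<lambda>(u,v). u @ v) ` (?F \<times> ?G)"
      by (auto intro!: image_eqI[of _ _ "(take i w, drop i w)"])
  qed
  moreover have "finite ((\<lambda>(u,v). u @ v) ` (?F \<times> ?G))"
    using assms by (auto simp: nc_carrier_def)
  ultimately show ?thesis unfolding nc_carrier_def by (auto intro: finite_subset)
qed

lemma carrier_add: "f \<in> nc_carrier \<Longrightarrow> g \<in> nc_carrier \<Longrightarrow> f \<oplus> g \<in> nc_carrier"
proof -
  assume a: "f \<in> nc_carrier" "g \<in> nc_carrier"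
  have "{w. (f \<oplus> g) w \<noteq> 0} \<subseteq> {w. f w \<noteq> 0} \<union> {w. g w \<noteq> 0}"
    by (auto simp: nc_add_def)
  then show ?thesis using a unfolding nc_carrier_def by (auto intro: finite_subset)
qed

lemma carrier_sub: "f \<in> nc_carrier \<Longrightarrow> g \<in> nc_carrier \<Longrightarrow> f \<ominus> g \<in> nc_carrier"
proof -
  assume a: "f \<in> nc_carrier" "g \<in> nc_carrier"
  have "{w. (f \<ominus> g) w \<noteq> 0} \<subseteq> {w. f w \<noteq> 0} \<union> {w. g w \<noteq> 0}"
    by (auto simp: nc_sub_def)
  then show ?thesis using a unfolding nc_carrier_def by (auto intro: finite_subset)
qed

lemma carrier_uminus: "f \<in> nc_carrier \<Longrightarrow> (\<lambda>w. - f w) \<in> nc_carrier"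
  by (simp add: nc_carrier_def)

lemma carrier_smul: "f \<in> nc_carrier \<Longrightarrow> c \<cdot> f \<in> nc_carrier"
proof -
  assume a: "f \<in> nc_carrier"
  have "{w. (c \<cdot> f) w \<noteq> 0} \<subseteq> {w. f w \<noteq> 0}"
    by (auto simp: nc_smul_def)
  then show ?thesis using a unfolding nc_carrier_def by (auto intro: finite_subset)
qed

lemma carrier_zero: "nc_zero \<in> nc_carrier" and carrier_one: "nc_one \<in> nc_carrier"
  by (auto simp: nc_carrier_def nc_zero_def nc_one_def)

lemma carrier_word: "(\<lambda>w. if w = u then (1::'k::field) else 0) \<in> nc_carrier"
  by (auto simp: nc_carrier_def)

typedef (overloaded) ('k::field) fa = "nc_carrier :: 'k nc set"
  morphisms Rep_fa Abs_fa
  using carrier_zero by blast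

setup_lifting type_definition_fa

instantiation fa :: (field) ring_1
begin
lift_definition zero_fa :: "'a fa" is nc_zero by (rule carrier_zero)
lift_definition one_fa :: "'a fa" is nc_one by (rule carrier_one)
lift_definition plus_fa :: "'a fa \<Rightarrow> 'a fa \<Rightarrow> 'a fa" is nc_add by (rule carrier_add)
lift_definition minus_fa :: "'a fa \<Rightarrow> 'a fa \<Rightarrow> 'a fa" is nc_sub by (rule carrier_sub)
lift_definition uminus_fa :: "'a fa \<Rightarrow> 'a fa" is "\<lambda>f w. - f w" by (rule carrier_uminus)
lift_definition times_fa :: "'a fa \<Rightarrow> 'a fa \<Rightarrow> 'a fa" is nc_mul by (rule carrier_mul)
instance
proof
  fix a b c :: "'a fa"
  show "a * b * c = a * (b * c)" by transfer (rule nc_mul_assoc)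
  show "(a + b) * c = a * c + b * c" by transfer (rule nc_mul_distrib_right)
  show "a * (b + c) = a * b + a * c" by transfer (rule nc_mul_distrib_left)
  show "1 * a = a" by transfer (rule nc_one_mul)
  show "a * 1 = a" by transfer (rule nc_mul_one)
  show "a + b + c = a + (b + c)" by transfer (auto simp: nc_add_def add.assoc)
  show "a + b = b + a" by transfer (auto simp: nc_add_def add.commute)
  show "0 + a = a" by transfer (auto simp: nc_add_def nc_zero_def)
  show "- a + a = 0" by transfer (auto simp: nc_add_def nc_zero_def)
  show "a - b = a + - b" by transfer (auto simp: nc_add_def nc_sub_def)
  show "(0::'a fa) \<noteq> 1" by transfer (auto simp: nc_zero_def nc_one_def fun_eq_iff)
qed
end

lift_definition sm :: "'k::field \<Rightarrow> 'k fa \<Rightarrow> 'k fa" is nc_smul by (rule carrier_smul)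
lift_definition wd :: "gen list \<Rightarrow> 'k::field fa" is "\<lambda>u w. if w = u then 1 else 0"
  by (rule carrier_word)

lemma Rep_fa_inject': "x = y \<longleftrightarrow> (\<forall>w. Rep_fa x w = Rep_fa y w)"
  by (metis Rep_fa_inject ext)

lemma rep_simps[simp]:
  "Rep_fa (x + y) w = Rep_fa x w + Rep_fa y w"
  "Rep_fa (x - y) w = Rep_fa x w - Rep_fa y w"
  "Rep_fa (- x) w = - Rep_fa x w"
  "Rep_fa 0 w = 0"
  "Rep_fa (sm c x) w = c * Rep_fa x w"
  "Rep_fa (wd u) w = (if w = u then 1 else 0)"
  by (transfer; simp add: nc_add_def nc_sub_def nc_zero_def nc_smul_def)+

lemma sm_simps[simp]:
  "sm c x * y = sm c (x * y)"
  "x * sm c y = sm c (x * y)"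
  "sm c (sm d x) = sm (c * d) x"
  "sm 1 x = x"
  "sm 0 x = 0"
  "sm c 0 = 0"
  by (transfer; auto simp: nc_smul_def nc_mul_def nc_zero_def sum_distrib_left mult_ac)+

lemma sm_add: "sm c (x + y) = sm c x + sm c y"
  and sm_diff: "sm c (x - y) = sm c x - sm c y"
  and sm_minus: "sm c (- x) = - sm c x"
  and add_sm: "sm (c + d) x = sm c x + sm d x"
  and diff_sm: "sm (c - d) x = sm c x - sm d x"
  and minus_sm: "sm (- c) x = - sm c x"
  by (simp_all add: Rep_fa_inject' algebra_simps)

lemma wd_mult[simp]: "wd u * wd v = wd (u @ v)"
proof (transfer)
  fix u v :: "gen list"
  show "(\<lambda>w. if w = u then 1 else 0) \<otimes> (\<lambda>w. if w = v then 1 else 0) =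
        (\<lambda>w. if w = u @ v then (1::'a) else 0)"
  proof
    fix w :: "gen list"
    have "((\<lambda>w. if w = u then 1 else 0) \<otimes> (\<lambda>w. if w = v then 1 else 0)) w =
          (\<Sum>i\<le>length w. if i = length u \<and> w = u @ v then (1::'a) else 0)"
      unfolding nc_mul_def
      by (rule sum.cong) (auto simp: append_eq_conv_conj)
    also have "\<dots> = (if w = u @ v then 1 else 0)"
      by (auto simp: sum.delta')
    finally show "((\<lambda>w. if w = u then 1 else 0) \<otimes> (\<lambda>w. if w = v then 1 else 0)) w =
       (if w = u @ v then (1::'a) else 0)" .
  qed
qed

lemma wd_Nil: "wd [] = 1"
  by transfer (auto simp: nc_one_def)

lemma wd_Cons: "wd (g # w) = wd [g] * wd w"
  by simp

lemma Rep_sum: "finite S \<Longrightarrow> Rep_fa (sum f S) w = (\<Sum>u\<in>S. Rep_fa (f u) w)"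
  by (induction S rule: finite_induct) auto

lemma sm_sum: "sm c (sum f S) = (\<Sum>u\<in>S. sm c (f u))"
  by (induction S rule: infinite_finite_induct) (auto simp: sm_add)

lemma sum_delta_mult: "finite S \<Longrightarrow> (\<Sum>u\<in>S. f u * (if w = u then 1 else 0)) = (if w \<in> S then f w else (0::'a::semiring_1))"
proof -
  assume "finite S"
  have "(\<Sum>u\<in>S. f u * (if w = u then 1 else 0)) = (\<Sum>u\<in>S. if w = u then f w else 0)"
    by (rule sum.cong) auto
  then show ?thesis using \<open>finite S\<close> by (simp add: sum.delta)
qed

definition supp :: "'k::field fa \<Rightarrow> gen list set" where
  "supp x = {w. Rep_fa x w \<noteq> 0}"

lemma finite_supp: "finite (supp x)"
  using Rep_fa[of x] by (simp add: supp_def nc_carrier_def)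

lemma fa_decomp:
  assumes "finite S" "supp x \<subseteq> S"
  shows "x = (\<Sum>u\<in>S. sm (Rep_fa x u) (wd u))"
proof -
  have "Rep_fa x w = (\<Sum>u\<in>S. Rep_fa x u * (if w = u then 1 else 0))" for w
  proof (cases "w \<in> S")
    case True then show ?thesis using assms by (simp add: sum_delta_mult)
  next
    case False then have "Rep_fa x w = 0" using assms by (auto simp: supp_def)
    then show ?thesis using False assms by (simp add: sum_delta_mult)
  qed
  note eq = this
  show ?thesis unfolding Rep_fa_inject'
  proof
    fix w
    have "Rep_fa (\<Sum>u\<in>S. sm (Rep_fa x u) (wd u)) w = (\<Sum>u\<in>S. Rep_fa x u * (if w = u then 1 else 0))"
      using assms(1) by (simp add: Rep_sum)
    then show "Rep_fa x w = Rep_fa (\<Sum>u\<in>S. sm (Rep_fa x u) (wd u)) w"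
      using eq[of w] by metis
  qed
qed

lemma Rep_mult: "Rep_fa (x * y) = Rep_fa x \<otimes> Rep_fa y"
  by transfer simp

lemma Rep_one: "Rep_fa 1 = nc_one"
  by transfer simp

lemma Rep_pow: "Rep_fa (x ^ n) = nc_pow (Rep_fa x) n"
  by (induction n) (simp_all add: Rep_one Rep_mult power_commutes[symmetric, of x])

definition "E1 = wd [G1]"
definition "E2 = wd [G2]"
definition "E3 q = E1 * E2 - sm (q^2) (E2 * E1)"
definition "Zf q = E2 * E3 q - sm (q^2) (E3 q * E2)"
definition "Wf q = E2 * E3 q - E3 q * E2"
definition "Zp q = E1 * Wf q - sm (inverse q ^ 4) (Wf q * E1)"
definition "S1f q = E1 * E1 * E2 - sm (q^2 + inverse q ^ 2) (E1 * E2 * E1) + E2 * E1 * E1"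
definition "S2f q = E2 * E2 * E2 * E1 - sm (q^2 + 1 + inverse q ^ 2) (E2 * E2 * E1 * E2)
   + sm (q^2 + 1 + inverse q ^ 2) (E2 * E1 * E2 * E2) - E1 * E2 * E2 * E2"

lemmas wdefs = E1_def E2_def E3_def Zf_def Wf_def Zp_def S1f_def S2f_def

lemma I1: "(q::'k::field) \<noteq> 0 \<Longrightarrow> S1f q = E1 * E3 q - sm (inverse q ^ 2) (E3 q * E1)"
  apply (simp add: wdefs algebra_simps sm_add sm_diff)
  apply (simp add: Rep_fa_inject')
  apply (simp add: field_simps)
  done

lemma I2: "(q::'k::field) \<noteq> 0 \<Longrightarrow> S2f q = Wf q * E2 - sm (inverse q ^ 2) (E2 * Wf q)"
  apply (simp add: wdefs algebra_simps sm_add sm_diff)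
  apply (simp add: Rep_fa_inject')
  apply (auto simp add: field_simps)
  done

lemma I4: "(q::'k::field) \<noteq> 0 \<Longrightarrow> sm (1 - inverse q ^ 2) (E3 q * E3 q + sm (1 + inverse q ^ 2) (Wf q * E1))
   = Zp q - sm (q^2) (E2 * S1f q) + S1f q * E2"
  apply (simp add: wdefs algebra_simps sm_add sm_diff)
  apply (simp add: Rep_fa_inject')
  apply (auto simp add: field_simps)
  done

lemma I5: "(q::'k::field) \<noteq> 0 \<Longrightarrow> E3 q * Wf q - sm (inverse q ^ 2) (Wf q * E3 q)
   = sm (q^2) (Zp q * E2) - sm (q^2) (E1 * S2f q) - sm (q^2) (E2 * Zp q) + S2f q * E1"
  apply (simp add: wdefs algebra_simps sm_add sm_diff)
  apply (simp add: Rep_fa_inject')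
  apply (auto simp add: field_simps)
  done

lemma IZ1: "(q::'k::field) \<noteq> 0 \<Longrightarrow> Zf q * E1 - E1 * Zf q = sm (q^2) (S1f q * E2 - E2 * S1f q)"
  apply (simp add: wdefs algebra_simps sm_add sm_diff)
  apply (simp add: Rep_fa_inject')
  apply (auto simp add: field_simps)
  done

lemma IZ2: "(q::'k::field) \<noteq> 0 \<Longrightarrow> Zf q * E2 - E2 * Zf q = sm (q^2) (S2f q)"
  apply (simp add: wdefs algebra_simps sm_add sm_diff)
  apply (simp add: Rep_fa_inject')
  apply (auto simp add: field_simps)
  done

lemma Rep_fun_simps:
  "Rep_fa (x + y) = Rep_fa x \<oplus> Rep_fa y"
  "Rep_fa (x - y) = Rep_fa x \<ominus> Rep_fa y"
  "Rep_fa (sm c x) = c \<cdot> Rep_fa x"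
  "Rep_fa (0::'k::field fa) = nc_zero"
  by (transfer, simp)+

lemma Rep_E1: "Rep_fa E1 = e1" and Rep_E2: "Rep_fa E2 = e2"
  by (simp_all add: E1_def E2_def e1_def e2_def gen_elt_def wd.rep_eq)

lemma Rep_E3: "Rep_fa (E3 q) = e3 q"
  by (simp add: E3_def e3_def Rep_fun_simps Rep_mult Rep_E1 Rep_E2)

lemma Rep_Zf: "Rep_fa (Zf q) = zz q"
  by (simp add: Zf_def zz_def Rep_fun_simps Rep_mult Rep_E3 Rep_E2)

lemma Rep_Wf: "Rep_fa (Wf q) = ww q"
  by (simp add: Wf_def ww_def Rep_fun_simps Rep_mult Rep_E3 Rep_E2)

lemma Rep_Zp: "Rep_fa (Zp q) = zprime q"
  by (simp add: Zp_def zprime_def Rep_fun_simps Rep_mult Rep_Wf Rep_E1)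

lemma Rep_S1f: "Rep_fa (S1f q) = S1 q"
  by (simp add: S1f_def S1_def Rep_fun_simps Rep_mult Rep_E1 Rep_E2)

lemma Rep_S2f: "Rep_fa (S2f q) = S2 q"
  by (simp add: S2f_def S2_def Rep_fun_simps Rep_mult Rep_E1 Rep_E2)

lemma nc_ideal_mult:
  assumes "x \<in> nc_ideal S"
  shows "a \<in> nc_carrier \<Longrightarrow> b \<in> nc_carrier \<Longrightarrow> a \<otimes> x \<otimes> b \<in> nc_ideal S"
  using assms
proof (induction arbitrary: a b rule: nc_ideal.induct)
  case zero
  then show ?case by (simp add: nc_mul_zero nc_ideal.zero)
next
  case (gen s a' b')
  have "a \<otimes> (a' \<otimes> s \<otimes> b') \<otimes> b = (a \<otimes> a') \<otimes> s \<otimes> (b' \<otimes> b)"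
    by (simp add: nc_mul_assoc)
  then show ?case using gen by (auto intro!: nc_ideal.gen carrier_mul)
next
  case (add x y)
  then show ?case by (simp add: nc_mul_distrib_left nc_mul_distrib_right nc_ideal.add)
qed

definition Jq :: "'k::field \<Rightarrow> 'k fa set" where
  "Jq q = {x. Rep_fa x \<in> Iq q}"

lemma J_zero: "0 \<in> Jq q"
  by (simp add: Jq_def Iq_def Rep_fun_simps nc_ideal.zero)

lemma J_add: "x \<in> Jq q \<Longrightarrow> y \<in> Jq q \<Longrightarrow> x + y \<in> Jq q"
  by (simp add: Jq_def Iq_def Rep_fun_simps nc_ideal.add)

lemma J_mult: "x \<in> Jq q \<Longrightarrow> a * x * b \<in> Jq q"
  by (simp add: Jq_def Iq_def Rep_mult nc_ideal_mult Rep_fa)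

lemma J_left: "x \<in> Jq q \<Longrightarrow> a * x \<in> Jq q"
  using J_mult[of x q a 1] by simp

lemma J_right: "x \<in> Jq q \<Longrightarrow> x * b \<in> Jq q"
  using J_mult[of x q 1 b] by simp

lemma J_sm: "x \<in> Jq q \<Longrightarrow> sm c x \<in> Jq q"
  using J_left[of x q "sm c 1"] by simp

lemma J_uminus: "x \<in> Jq q \<Longrightarrow> - x \<in> Jq q"
  using J_sm[of x q "-1"] by (simp add: minus_sm)

lemma J_diff: "x \<in> Jq q \<Longrightarrow> y \<in> Jq q \<Longrightarrow> x - y \<in> Jq q"
  using J_add[of x q "- y"] J_uminus[of y q] by simp

lemma J_sm_cancel: "sm c x \<in> Jq q \<Longrightarrow> c \<noteq> 0 \<Longrightarrow> x \<in> Jq q"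
  using J_sm[of "sm c x" q "inverse c"] by simp

lemma nc_gen_in: "s \<in> S \<Longrightarrow> s \<in> nc_carrier \<Longrightarrow> s \<in> nc_ideal S"
  using nc_ideal.gen[of s S nc_one nc_one] by (simp add: nc_one_mul nc_mul_one carrier_one)

lemma J_S1: "S1f q \<in> Jq q" and J_S2: "S2f q \<in> Jq q" and J_Zp: "Zp q \<in> Jq q"
  by (simp_all add: Jq_def Iq_def nc_gen_in Rep_S1f Rep_S2f Rep_Zp Rep_fa
      flip: Rep_S1f Rep_S2f Rep_Zp)

definition eqv :: "'k::field \<Rightarrow> 'k fa \<Rightarrow> 'k fa \<Rightarrow> bool" where
  "eqv q x y \<longleftrightarrow> x - y \<in> Jq q"

lemma eqv_refl[simp]: "eqv q x x"
  by (simp add: eqv_def J_zero)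

lemma eqv_sym: "eqv q x y \<Longrightarrow> eqv q y x"
  unfolding eqv_def using J_uminus by fastforce

lemma eqv_trans: "eqv q x y \<Longrightarrow> eqv q y z \<Longrightarrow> eqv q x z"
  unfolding eqv_def using J_add by fastforce

lemma eqv_add: "eqv q x y \<Longrightarrow> eqv q x' y' \<Longrightarrow> eqv q (x + x') (y + y')"
  unfolding eqv_def using J_add by (fastforce simp: algebra_simps)

lemma eqv_diff: "eqv q x y \<Longrightarrow> eqv q x' y' \<Longrightarrow> eqv q (x - x') (y - y')"
  unfolding eqv_def using J_diff by (fastforce simp: algebra_simps)

lemma eqv_mult_left: "eqv q x y \<Longrightarrow> eqv q (a * x) (a * y)"
  unfolding eqv_def using J_left by (fastforce simp: algebra_simps)

lemma eqv_mult_right: "eqv q x y \<Longrightarrow> eqv q (x * b) (y * b)"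
  unfolding eqv_def using J_right by (fastforce simp: algebra_simps)

lemma eqv_sm: "eqv q x y \<Longrightarrow> eqv q (sm c x) (sm c y)"
  unfolding eqv_def using J_sm by (fastforce simp: sm_diff)

lemma eqv_J: "x \<in> Jq q \<Longrightarrow> eqv q x 0"
  by (simp add: eqv_def)

lemmas [trans] = eqv_trans

lemma Rc: "(q::'k::field) \<noteq> 0 \<Longrightarrow> eqv q (Wf q * E2) (sm (inverse q ^ 2) (E2 * Wf q))"
  using J_S2[of q] by (simp add: I2 eqv_def)

lemma Rd: "(q::'k::field) \<noteq> 0 \<Longrightarrow> eqv q (E1 * E3 q) (sm (inverse q ^ 2) (E3 q * E1))"
  using J_S1[of q] by (simp add: I1 eqv_def)

lemma Re: "eqv q (E1 * Wf q) (sm (inverse q ^ 4) (Wf q * E1))"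
  using J_Zp[of q] by (simp add: Zp_def eqv_def)

lemma Rf: "(q::'k::field) \<noteq> 0 \<Longrightarrow> eqv q (E3 q * Wf q) (sm (inverse q ^ 2) (Wf q * E3 q))"
proof -
  assume q: "q \<noteq> 0"
  have "sm (q^2) (Zp q * E2) - sm (q^2) (E1 * S2f q) - sm (q^2) (E2 * Zp q) + S2f q * E1 \<in> Jq q"
    by (intro J_add J_diff J_sm J_left J_right J_S2 J_Zp)
  then show ?thesis using I5[OF q] by (simp add: eqv_def)
qed

lemma Rg: "(q::'k::field) \<noteq> 0 \<Longrightarrow> q^2 \<noteq> 1 \<Longrightarrow>
   eqv q (E3 q * E3 q) (- sm (1 + inverse q ^ 2) (Wf q * E1))"
proof -
  assume q: "q \<noteq> 0" "q^2 \<noteq> 1"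
  have "Zp q - sm (q^2) (E2 * S1f q) + S1f q * E2 \<in> Jq q"
    by (intro J_add J_diff J_sm J_left J_right J_S1 J_Zp)
  then have "sm (1 - inverse q ^ 2) (E3 q * E3 q + sm (1 + inverse q ^ 2) (Wf q * E1)) \<in> Jq q"
    using I4[OF q(1)] by simp
  moreover have "1 - inverse q ^ 2 \<noteq> 0"
    using q by (auto simp: field_simps)
  ultimately have "E3 q * E3 q + sm (1 + inverse q ^ 2) (Wf q * E1) \<in> Jq q"
    by (rule J_sm_cancel)
  then show ?thesis by (simp add: eqv_def)
qed

lemma R_a: "E1 * E2 = E3 q + sm (q^2) (E2 * E1)"
  by (simp add: E3_def)

lemma R_b: "E3 q * E2 = E2 * E3 q - Wf q"
  by (simp add: Wf_def)

definition Ym :: "'k::field \<Rightarrow> nat \<Rightarrow> bool \<Rightarrow> nat \<Rightarrow> 'k fa" where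
  "Ym q m e c = Wf q ^ m * (if e then E3 q else 1) * E1 ^ c"

definition BB :: "'k::field \<Rightarrow> nat \<Rightarrow> nat \<Rightarrow> bool \<Rightarrow> nat \<Rightarrow> 'k fa" where
  "BB q a m e c = E2 ^ a * Ym q m e c"

inductive_set linB :: "'k::field \<Rightarrow> 'k fa set" for q where
  lzero: "0 \<in> linB q"
| lbase: "BB q a m e c \<in> linB q"
| ladd: "x \<in> linB q \<Longrightarrow> y \<in> linB q \<Longrightarrow> x + y \<in> linB q"
| lsm: "x \<in> linB q \<Longrightarrow> sm c x \<in> linB q"

definition good :: "'k::field \<Rightarrow> 'k fa \<Rightarrow> bool" where
  "good q x \<longleftrightarrow> (\<exists>y\<in>linB q. eqv q x y)"

lemma good_eqv: "good q x \<Longrightarrow> eqv q x' x \<Longrightarrow> good q x'"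
  unfolding good_def using eqv_trans by blast

lemma good_lin: "y \<in> linB q \<Longrightarrow> good q y"
  unfolding good_def using eqv_refl by blast

lemma good_BB: "good q (BB q a m e c)"
  by (rule good_lin) (rule lbase)

lemma good_add: "good q x \<Longrightarrow> good q y \<Longrightarrow> good q (x + y)"
  unfolding good_def by (blast intro: ladd eqv_add)

lemma good_sm: "good q x \<Longrightarrow> good q (sm c x)"
  unfolding good_def by (blast intro: lsm eqv_sm)

lemma good_zero: "good q 0"
  by (rule good_lin) (rule lzero)

lemma good_diff: "good q x \<Longrightarrow> good q y \<Longrightarrow> good q (x - y)"
  using good_add[of q x "sm (-1) y"] good_sm[of q y "-1"] by (simp add: minus_sm)

lemma good_sm_BB: "good q (sm c (BB q a m e c'))"
  by (intro good_sm good_BB)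

lemma good_leftI:
  assumes "\<And>a m e c. good q (X * BB q a m e c)" and "good q x"
  shows "good q (X * x)"
proof -
  obtain y where y: "y \<in> linB q" "eqv q x y" using assms(2) unfolding good_def by blast
  from y(1) have "good q (X * y)"
  proof (induction rule: linB.induct)
    case lzero then show ?case by (simp add: good_zero)
  next
    case (lbase a m e c) then show ?case by (rule assms(1))
  next
    case (ladd x y) then show ?case by (simp add: distrib_left good_add)
  next
    case (lsm x c) then show ?case by (simp add: good_sm)
  qed
  moreover have "eqv q (X * x) (X * y)" using y(2) by (rule eqv_mult_left)
  ultimately show ?thesis by (rule good_eqv)
qed

lemma E2_BB: "E2 * BB q a m e c = BB q (Suc a) m e c"
  by (simp add: BB_def mult.assoc)

lemma good_E2: "good q x \<Longrightarrow> good q (E2 * x)"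
  by (rule good_leftI) (simp_all add: E2_BB good_BB)

lemma W_pass: "(q::'k::field) \<noteq> 0 \<Longrightarrow>
  eqv q (Wf q * E2 ^ a * Y) (sm (inverse q ^ (2 * a)) (E2 ^ a * Wf q * Y))"
proof (induction a arbitrary: Y)
  case 0 then show ?case by simp
next
  case (Suc a)
  have "Wf q * E2 ^ Suc a * Y = (Wf q * E2) * (E2 ^ a * Y)" by (simp add: mult.assoc)
  also have "eqv q \<dots> (sm (inverse q ^ 2) (E2 * Wf q) * (E2 ^ a * Y))"
    by (rule eqv_mult_right[OF Rc[OF Suc.prems]])
  also have "\<dots> = sm (inverse q ^ 2) (E2 * (Wf q * E2 ^ a * Y))" by (simp add: mult.assoc)
  also have "eqv q \<dots> (sm (inverse q ^ 2) (E2 * sm (inverse q ^ (2 * a)) (E2 ^ a * Wf q * Y)))"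
    by (intro eqv_sm eqv_mult_left Suc.IH Suc.prems)
  also have "\<dots> = sm (inverse q ^ (2 * Suc a)) (E2 ^ Suc a * Wf q * Y)"
    by (simp add: mult.assoc flip: power_add)
  finally show ?case .
qed

lemma W_BB: "(q::'k::field) \<noteq> 0 \<Longrightarrow>
  eqv q (Wf q * BB q a m e c) (sm (inverse q ^ (2 * a)) (BB q a (Suc m) e c))"
  using W_pass[of q a "Ym q m e c"] by (simp add: BB_def Ym_def mult.assoc)

lemma E3_Wpow: "(q::'k::field) \<noteq> 0 \<Longrightarrow>
  eqv q (E3 q * Wf q ^ m) (sm (inverse q ^ (2 * m)) (Wf q ^ m * E3 q))"
proof (induction m)
  case 0 then show ?case by simp
next
  case (Suc m)
  have "E3 q * Wf q ^ Suc m = (E3 q * Wf q ^ m) * Wf q" by (simp add: mult.assoc power_commutes)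
  also have "eqv q \<dots> (sm (inverse q ^ (2 * m)) (Wf q ^ m * E3 q) * Wf q)"
    by (rule eqv_mult_right[OF Suc.IH[OF Suc.prems]])
  also have "\<dots> = sm (inverse q ^ (2 * m)) (Wf q ^ m * (E3 q * Wf q))" by (simp add: mult.assoc)
  also have "eqv q \<dots> (sm (inverse q ^ (2 * m)) (Wf q ^ m * sm (inverse q ^ 2) (Wf q * E3 q)))"
    by (intro eqv_sm eqv_mult_left Rf Suc.prems)
  also have "\<dots> = sm (inverse q ^ (2 * Suc m)) (Wf q ^ Suc m * E3 q)"
    by (simp del: power_Suc add: power_Suc2 mult.assoc flip: power_add)
  finally show ?case .
qed

lemma E1_Wpow:
  "eqv q (E1 * Wf q ^ m) (sm (inverse q ^ (4 * m)) (Wf q ^ m * E1))"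
proof (induction m)
  case 0 then show ?case by simp
next
  case (Suc m)
  have "E1 * Wf q ^ Suc m = (E1 * Wf q ^ m) * Wf q" by (simp add: mult.assoc power_commutes)
  also have "eqv q \<dots> (sm (inverse q ^ (4 * m)) (Wf q ^ m * E1) * Wf q)"
    by (rule eqv_mult_right[OF Suc.IH])
  also have "\<dots> = sm (inverse q ^ (4 * m)) (Wf q ^ m * (E1 * Wf q))" by (simp add: mult.assoc)
  also have "eqv q \<dots> (sm (inverse q ^ (4 * m)) (Wf q ^ m * sm (inverse q ^ 4) (Wf q * E1)))"
    by (intro eqv_sm eqv_mult_left Re)
  also have "\<dots> = sm (inverse q ^ (4 * Suc m)) (Wf q ^ Suc m * E1)"
    by (simp del: power_Suc add: power_Suc2 mult.assoc add.commute flip: power_add)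
  finally show ?case .
qed

lemma eqv_ctx: "eqv q x y \<Longrightarrow> eqv q (a * x * b) (a * y * b)"
  by (intro eqv_mult_left eqv_mult_right)

lemma good_uminus: "good q x \<Longrightarrow> good q (- x)"
  using good_sm[of q x "-1"] by (simp add: minus_sm)

lemma E3_base:
  assumes q: "(q::'k::field) \<noteq> 0" "q^2 \<noteq> 1"
  shows "good q (E3 q * Ym q m e c)"
proof -
  have "E3 q * Ym q m e c = (E3 q * Wf q ^ m) * ((if e then E3 q else 1) * E1 ^ c)"
    by (simp add: Ym_def mult.assoc)
  also have "eqv q \<dots> (sm (inverse q ^ (2 * m)) (Wf q ^ m * E3 q) * ((if e then E3 q else 1) * E1 ^ c))"
    by (rule eqv_mult_right[OF E3_Wpow[OF q(1)]])
  also have "\<dots> = sm (inverse q ^ (2 * m)) (Wf q ^ m * (E3 q * (if e then E3 q else 1)) * E1 ^ c)"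
    by (simp add: mult.assoc)
  finally have 1: "eqv q (E3 q * Ym q m e c)
     (sm (inverse q ^ (2 * m)) (Wf q ^ m * (E3 q * (if e then E3 q else 1)) * E1 ^ c))" .
  show ?thesis
  proof (cases e)
    case False
    then have "Wf q ^ m * (E3 q * (if e then E3 q else 1)) * E1 ^ c = BB q 0 m True c"
      by (simp add: BB_def Ym_def)
    then have "eqv q (E3 q * Ym q m e c) (sm (inverse q ^ (2 * m)) (BB q 0 m True c))"
      using 1 by simp
    then show ?thesis by (rule good_eqv[OF good_sm_BB])
  next
    case True
    have "eqv q (Wf q ^ m * (E3 q * E3 q) * E1 ^ c) (Wf q ^ m * (- sm (1 + inverse q ^ 2) (Wf q * E1)) * E1 ^ c)"
      by (rule eqv_ctx[OF Rg[OF q]])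
    also have "\<dots> = - sm (1 + inverse q ^ 2) (BB q 0 (Suc m) False (Suc c))"
      by (simp add: BB_def Ym_def mult.assoc power_Suc[of E1] del: power_Suc add: power_Suc2[of "Wf q"])
    finally have "eqv q (sm (inverse q ^ (2 * m)) (Wf q ^ m * (E3 q * E3 q) * E1 ^ c))
       (sm (inverse q ^ (2 * m)) (- sm (1 + inverse q ^ 2) (BB q 0 (Suc m) False (Suc c))))"
      by (rule eqv_sm)
    then have "eqv q (E3 q * Ym q m e c) (sm (inverse q ^ (2 * m)) (- sm (1 + inverse q ^ 2) (BB q 0 (Suc m) False (Suc c))))"
      using 1 True eqv_trans by simp
    moreover have "good q (sm (inverse q ^ (2 * m)) (- sm (1 + inverse q ^ 2) (BB q 0 (Suc m) False (Suc c))))"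
      by (intro good_sm good_uminus good_BB)
    ultimately show ?thesis using good_eqv by blast
  qed
qed

lemma E1_base:
  assumes q: "(q::'k::field) \<noteq> 0"
  shows "good q (E1 * Ym q m e c)"
proof -
  have "E1 * Ym q m e c = (E1 * Wf q ^ m) * ((if e then E3 q else 1) * E1 ^ c)"
    by (simp add: Ym_def mult.assoc)
  also have "eqv q \<dots> (sm (inverse q ^ (4 * m)) (Wf q ^ m * E1) * ((if e then E3 q else 1) * E1 ^ c))"
    by (rule eqv_mult_right[OF E1_Wpow])
  also have "\<dots> = sm (inverse q ^ (4 * m)) (Wf q ^ m * (E1 * (if e then E3 q else 1)) * E1 ^ c)"
    by (simp add: mult.assoc)
  finally have 1: "eqv q (E1 * Ym q m e c)
     (sm (inverse q ^ (4 * m)) (Wf q ^ m * (E1 * (if e then E3 q else 1)) * E1 ^ c))" .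
  show ?thesis
  proof (cases e)
    case False
    then have "Wf q ^ m * (E1 * (if e then E3 q else 1)) * E1 ^ c = BB q 0 m False (Suc c)"
      by (simp add: BB_def Ym_def mult.assoc)
    then have "eqv q (E1 * Ym q m e c) (sm (inverse q ^ (4 * m)) (BB q 0 m False (Suc c)))"
      using 1 by simp
    then show ?thesis by (rule good_eqv[OF good_sm_BB])
  next
    case True
    have "eqv q (Wf q ^ m * (E1 * E3 q) * E1 ^ c) (Wf q ^ m * (sm (inverse q ^ 2) (E3 q * E1)) * E1 ^ c)"
      by (rule eqv_ctx[OF Rd[OF q]])
    also have "\<dots> = sm (inverse q ^ 2) (BB q 0 m True (Suc c))"
      by (simp add: BB_def Ym_def mult.assoc)
    finally have "eqv q (sm (inverse q ^ (4 * m)) (Wf q ^ m * (E1 * E3 q) * E1 ^ c))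
       (sm (inverse q ^ (4 * m)) (sm (inverse q ^ 2) (BB q 0 m True (Suc c))))"
      by (rule eqv_sm)
    then have "eqv q (E1 * Ym q m e c) (sm (inverse q ^ (4 * m)) (sm (inverse q ^ 2) (BB q 0 m True (Suc c))))"
      using 1 True eqv_trans by simp
    moreover have "good q (sm (inverse q ^ (4 * m)) (sm (inverse q ^ 2) (BB q 0 m True (Suc c))))"
      by (intro good_sm good_BB)
    ultimately show ?thesis using good_eqv by blast
  qed
qed

lemma E3_pass:
  assumes q: "(q::'k::field) \<noteq> 0" "q^2 \<noteq> 1"
  shows "good q (E3 q * BB q a m e c)"
proof (induction a arbitrary: m e c)
  case 0
  then show ?case using E3_base[OF q] by (simp add: BB_def)
next
  case (Suc a)
  have "E3 q * BB q (Suc a) m e c = (E3 q * E2) * BB q a m e c"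
    by (simp add: E2_BB[symmetric] mult.assoc)
  also have "\<dots> = E2 * (E3 q * BB q a m e c) - Wf q * BB q a m e c"
    by (simp add: R_b left_diff_distrib mult.assoc)
  finally have "E3 q * BB q (Suc a) m e c = E2 * (E3 q * BB q a m e c) - Wf q * BB q a m e c" .
  moreover have "good q (E2 * (E3 q * BB q a m e c))" by (intro good_E2 Suc.IH)
  moreover have "good q (Wf q * BB q a m e c)"
    using good_eqv[OF good_sm_BB W_BB[OF q(1)]] .
  ultimately show ?case by (simp add: good_diff)
qed

lemma E1_pass:
  assumes q: "(q::'k::field) \<noteq> 0" "q^2 \<noteq> 1"
  shows "good q (E1 * BB q a m e c)"
proof (induction a arbitrary: m e c)
  case 0
  then show ?case using E1_base[OF q(1)] by (simp add: BB_def)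
next
  case (Suc a)
  have "E1 * BB q (Suc a) m e c = (E1 * E2) * BB q a m e c"
    by (simp add: E2_BB[symmetric] mult.assoc)
  also have "\<dots> = E3 q * BB q a m e c + sm (q^2) (E2 * (E1 * BB q a m e c))"
    by (simp add: R_a[of q] distrib_right mult.assoc)
  finally have "E1 * BB q (Suc a) m e c = E3 q * BB q a m e c + sm (q^2) (E2 * (E1 * BB q a m e c))" .
  moreover have "good q (E2 * (E1 * BB q a m e c))" by (intro good_E2 Suc.IH)
  ultimately show ?case by (simp add: good_add good_sm E3_pass[OF q])
qed

lemma good_E1: "(q::'k::field) \<noteq> 0 \<Longrightarrow> q^2 \<noteq> 1 \<Longrightarrow> good q x \<Longrightarrow> good q (E1 * x)"
  by (rule good_leftI) (simp_all add: E1_pass)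

lemma good_wd: "(q::'k::field) \<noteq> 0 \<Longrightarrow> q^2 \<noteq> 1 \<Longrightarrow> good q (wd w)"
proof (induction w)
  case Nil
  have "wd [] = BB q 0 0 False 0" by (simp add: BB_def Ym_def wd_Nil)
  then show ?case by (simp add: good_BB)
next
  case (Cons g w)
  show ?case
  proof (cases g)
    case G1
    have eq: "wd (g # w) = E1 * wd w" by (simp add: E1_def G1)
    have "good q (wd w)" using Cons by simp
    then have "good q (E1 * wd w)" by (rule good_E1[OF Cons.prems])
    then show ?thesis by (simp only: eq)
  next
    case G2
    have eq: "wd (g # w) = E2 * wd w" by (simp add: E2_def G2)
    have "good q (wd w)" using Cons by simp
    then have "good q (E2 * wd w)" by (rule good_E2)
    then show ?thesis by (simp only: eq)
  qed
qed

lemma good_all: "(q::'k::field) \<noteq> 0 \<Longrightarrow> q^2 \<noteq> 1 \<Longrightarrow> good q x"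
proof -
  assume q: "q \<noteq> 0" "q^2 \<noteq> 1"
  have "good q (\<Sum>u\<in>S. sm (Rep_fa x u) (wd u))" if "finite S" for S
    using that by (induction S rule: finite_induct) (simp_all add: good_zero good_add good_sm good_wd q)
  from this[OF finite_supp[of x]] show ?thesis
    by (simp flip: fa_decomp[OF finite_supp subset_refl, of x])
qed

type_synonym 'k vc = "nat \<Rightarrow> nat \<Rightarrow> nat \<Rightarrow> 'k"

definition Lx :: "'k::field vc \<Rightarrow> 'k vc" where
  "Lx v = (\<lambda>i k j. case i of 0 \<Rightarrow> 0 | Suc i' \<Rightarrow> v i' k j)"
definition Lu :: "'k::field \<Rightarrow> 'k vc \<Rightarrow> 'k vc" where
  "Lu q v = (\<lambda>i k j. case k of 0 \<Rightarrow> 0 | Suc k' \<Rightarrow> inverse q ^ (4 * i) * v i k' j)"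
definition Ly :: "'k::field \<Rightarrow> 'k vc \<Rightarrow> 'k vc" where
  "Ly q v = (\<lambda>i k j. case j of 0 \<Rightarrow> 0 | Suc j' \<Rightarrow> q ^ (2 * i) * inverse q ^ (2 * k) * v i k j')"
definition Rx :: "'k::field \<Rightarrow> 'k vc \<Rightarrow> 'k vc" where
  "Rx q v = (\<lambda>i k j. case i of 0 \<Rightarrow> 0 | Suc i' \<Rightarrow> q ^ (2 * j) * inverse q ^ (4 * k) * v i' k j)"
definition Ry :: "'k::field vc \<Rightarrow> 'k vc" where
  "Ry v = (\<lambda>i k j. case j of 0 \<Rightarrow> 0 | Suc j' \<Rightarrow> v i k j')"
definition Ru :: "'k::field \<Rightarrow> 'k vc \<Rightarrow> 'k vc" where
  "Ru q v = (\<lambda>i k j. case k of 0 \<Rightarrow> 0 | Suc k' \<Rightarrow> inverse q ^ (2 * j) * v i k' j)"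

lemmas opdefs = Lx_def Lu_def Ly_def Rx_def Ry_def Ru_def

definition lin :: "('k::field vc \<Rightarrow> 'k vc) \<Rightarrow> bool" where
  "lin T \<longleftrightarrow> (\<forall>v w. T (\<lambda>i k j. v i k j + w i k j) = (\<lambda>i k j. T v i k j + T w i k j)) \<and>
              (\<forall>c v. T (\<lambda>i k j. c * v i k j) = (\<lambda>i k j. c * T v i k j))"

lemma lin_zero: assumes "lin T" shows "T (\<lambda>i k j. 0) = (\<lambda>i k j. 0)"
proof -
  from assms have h: "\<And>c v. T (\<lambda>i k j. c * v i k j) = (\<lambda>i k j. c * T v i k j)"
    by (simp add: lin_def)
  have "T (\<lambda>i k j. 0 * (\<lambda>i k j. 0) i k j) = (\<lambda>i k j. 0 * T (\<lambda>i k j. 0) i k j)"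
    by (rule h)
  then show ?thesis by simp
qed

lemma lin_sum: assumes "lin T" "finite S" shows
  "T (\<lambda>i k j. \<Sum>s\<in>S. c s * f s i k j) = (\<lambda>i k j. \<Sum>s\<in>S. c s * T (f s) i k j)"
  using assms(2)
proof (induction S rule: finite_induct)
  case empty then show ?case using assms(1) by (simp add: lin_zero)
next
  case (insert x F)
  then have "T (\<lambda>i k j. \<Sum>s\<in>insert x F. c s * f s i k j) =
     T (\<lambda>i k j. c x * f x i k j + (\<Sum>s\<in>F. c s * f s i k j))" by simp
  also have "\<dots> = (\<lambda>i k j. c x * T (f x) i k j + T (\<lambda>i k j. \<Sum>s\<in>F. c s * f s i k j) i k j)"
    using assms(1) unfolding lin_def by simp
  finally show ?case using insert by simp
qed

lemma lin_comp: "lin S \<Longrightarrow> lin T \<Longrightarrow> lin (\<lambda>v. S (T v))"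
  unfolding lin_def by simp

lemma lin_ops: "lin Lx" "lin (Lu q)" "lin (Ly q)" "lin (Rx q)" "lin Ry" "lin (Ru q)"
  unfolding lin_def opdefs by (simp_all add: fun_eq_iff distrib_left mult.left_commute split: nat.split)

definition opg :: "'k::field \<Rightarrow> gen \<Rightarrow> 'k vc \<Rightarrow> 'k vc" where
  "opg q g = (case g of G1 \<Rightarrow> Lx | G2 \<Rightarrow> (\<lambda>v i k j. Ly q v i k j + Lu q (Ly q v) i k j))"

primrec opw :: "'k::field \<Rightarrow> gen list \<Rightarrow> 'k vc \<Rightarrow> 'k vc" where
  "opw q [] v = v"
| "opw q (g # w) v = opg q g (opw q w v)"

lemma lin_opg: "lin (opg q g)"
  using lin_ops(1) lin_ops(2)[of q] lin_ops(3)[of q] by (cases g) (auto simp: opg_def lin_def algebra_simps)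

lemma lin_opw: "lin (opw q w)"
proof (induction w)
  case Nil then show ?case by (simp add: lin_def)
next
  case (Cons g w)
  then show ?case using lin_comp[OF lin_opg[of q g] Cons] by simp
qed

lemma opw_append: "opw q (u @ w) v = opw q u (opw q w v)"
  by (induction u) auto

definition phi :: "'k::field \<Rightarrow> 'k fa \<Rightarrow> 'k vc \<Rightarrow> 'k vc" where
  "phi q x v = (\<lambda>i k j. \<Sum>u\<in>supp x. Rep_fa x u * opw q u v i k j)"

lemma phi_sum:
  assumes "finite S" "supp x \<subseteq> S"
  shows "phi q x v = (\<lambda>i k j. \<Sum>u\<in>S. Rep_fa x u * opw q u v i k j)"
proof -
  have "(\<Sum>u\<in>supp x. Rep_fa x u * opw q u v i k j) = (\<Sum>u\<in>S. Rep_fa x u * opw q u v i k j)" for i k j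
    by (rule sum.mono_neutral_left) (use assms in \<open>auto simp: supp_def\<close>)
  then show ?thesis by (simp add: phi_def)
qed

lemma supp_add: "supp (x + y) \<subseteq> supp x \<union> supp y"
  by (auto simp: supp_def)

lemma phi_add: "phi q (x + y) v = (\<lambda>i k j. phi q x v i k j + phi q y v i k j)"
proof -
  let ?S = "supp x \<union> supp y"
  have f: "finite ?S" by (simp add: finite_supp)
  show ?thesis
    using phi_sum[OF f supp_add] phi_sum[OF f, of x] phi_sum[OF f, of y]
    by (simp add: distrib_right sum.distrib)
qed

lemma phi_sm: "phi q (sm c x) v = (\<lambda>i k j. c * phi q x v i k j)"
proof -
  have "supp (sm c x) \<subseteq> supp x" by (auto simp: supp_def)
  then show ?thesis
    using phi_sum[OF finite_supp, of "sm c x"] by (simp add: phi_def sum_distrib_left mult.assoc)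
qed

lemma phi_zero: "phi q 0 v = (\<lambda>i k j. 0)"
  by (simp add: phi_def supp_def)

lemma phi_wd: "phi q (wd u) v = opw q u v"
proof -
  have "supp (wd u) \<subseteq> {u}" by (auto simp: supp_def)
  then show ?thesis using phi_sum[of "{u}" "wd u" q v] by simp
qed

lemma phi_setsum: "finite S \<Longrightarrow> phi q (\<Sum>s\<in>S. f s) v = (\<lambda>i k j. \<Sum>s\<in>S. phi q (f s) v i k j)"
  by (induction S rule: finite_induct) (simp_all add: phi_zero phi_add)

lemma phi_wd_mult: "phi q (wd u * y) v = opw q u (phi q y v)"
proof -
  have y: "y = (\<Sum>w\<in>supp y. sm (Rep_fa y w) (wd w))"
    by (rule fa_decomp[OF finite_supp subset_refl])
  have "wd u * y = (\<Sum>w\<in>supp y. sm (Rep_fa y w) (wd (u @ w)))"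
    by (subst y) (simp add: sum_distrib_left)
  then have "phi q (wd u * y) v = (\<lambda>i k j. \<Sum>w\<in>supp y. Rep_fa y w * opw q u (opw q w v) i k j)"
    by (simp add: phi_setsum finite_supp phi_sm phi_wd opw_append)
  also have "\<dots> = opw q u (phi q y v)"
    unfolding phi_def by (simp add: lin_sum[OF lin_opw finite_supp])
  finally show ?thesis .
qed

lemma phi_mult: "phi q (x * y) v = phi q x (phi q y v)"
proof -
  have x: "x = (\<Sum>u\<in>supp x. sm (Rep_fa x u) (wd u))"
    by (rule fa_decomp[OF finite_supp subset_refl])
  have "x * y = (\<Sum>u\<in>supp x. sm (Rep_fa x u) (wd u * y))"
    by (subst x) (simp add: sum_distrib_right)
  then have "phi q (x * y) v = (\<lambda>i k j. \<Sum>u\<in>supp x. Rep_fa x u * opw q u (phi q y v) i k j)"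
    by (simp add: phi_setsum finite_supp phi_sm phi_wd_mult)
  also have "\<dots> = phi q x (phi q y v)"
    unfolding phi_def[of q x] by simp
  finally show ?thesis .
qed

lemma phi_one: "phi q 1 v = v"
  using phi_wd[of q "[]" v] by (simp add: wd_Nil)

lemma lin_phi: "lin (phi q x)"
proof -
  have a: "opw q u (\<lambda>i k j. v i k j + w i k j) = (\<lambda>i k j. opw q u v i k j + opw q u w i k j)" for u v w
    using lin_opw[of q u] unfolding lin_def by blast
  have b: "opw q u (\<lambda>i k j. c * v i k j) = (\<lambda>i k j. c * opw q u v i k j)" for u c v
    using lin_opw[of q u] unfolding lin_def by blast
  show ?thesis
    unfolding lin_def phi_def a b
    by (simp add: distrib_left sum.distrib sum_distrib_left mult.left_commute)
qed

lemma phi_E1: "phi q E1 v = Lx v"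
  by (simp add: E1_def phi_wd opg_def)

lemma phi_E2: "phi q E2 v = (\<lambda>i k j. Ly q v i k j + Lu q (Ly q v) i k j)"
  by (simp add: E2_def phi_wd opg_def)

lemma phi_diff: "phi q (x - y) v = (\<lambda>i k j. phi q x v i k j - phi q y v i k j)"
  using phi_add[of q x "- y" v] phi_sm[of q "-1" y v] by (simp add: minus_sm)

lemma phi_E3: "(q::'k::field) \<noteq> 0 \<Longrightarrow> phi q (E3 q) v = (\<lambda>i k j. (1 - q^4) * Lx (Ly q v) i k j)"
  apply (simp add: E3_def phi_diff phi_sm phi_mult phi_E1 phi_E2)
  apply (simp add: fun_eq_iff opdefs split: nat.split)
  apply (auto simp: field_simps)
  apply (simp_all add: numeral_eq_Suc power_add mult_ac)
  done

lemma phi_W: "(q::'k::field) \<noteq> 0 \<Longrightarrow>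
  phi q (Wf q) v = (\<lambda>i k j. (1 - q^4) * (q^2 - 1) * Lx (Ly q (Ly q v)) i k j)"
  apply (simp add: Wf_def phi_diff phi_mult phi_E3 phi_E2)
  apply (simp add: fun_eq_iff opdefs split: nat.split)
  apply (auto simp: field_simps)
  apply (simp_all add: numeral_eq_Suc power_add mult_ac)
  done

lemma phi_Z: "(q::'k::field) \<noteq> 0 \<Longrightarrow>
  phi q (Zf q) v = (\<lambda>i k j. (1 - q^4) * (inverse q ^ 2 - 1) * Lx (Lu q (Ly q (Ly q v))) i k j)"
  apply (simp add: Zf_def phi_diff phi_sm phi_mult phi_E3 phi_E2)
  apply (simp add: fun_eq_iff opdefs split: nat.split)
  apply (auto simp: field_simps)
  apply (simp_all add: numeral_eq_Suc power_add mult_ac)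
  done

lemma phi_S1: "(q::'k::field) \<noteq> 0 \<Longrightarrow> phi q (S1f q) v = (\<lambda>i k j. 0)"
  apply (simp add: I1 phi_diff phi_sm phi_mult phi_E3 phi_E1)
  apply (simp add: fun_eq_iff opdefs split: nat.split)
  apply (auto simp: field_simps)
  apply (simp_all add: numeral_eq_Suc power_add mult_ac)
  done

lemma phi_Zp: "(q::'k::field) \<noteq> 0 \<Longrightarrow> phi q (Zp q) v = (\<lambda>i k j. 0)"
  apply (simp add: Zp_def phi_diff phi_sm phi_mult phi_W phi_E1)
  apply (simp add: fun_eq_iff opdefs split: nat.split)
  apply (auto simp: field_simps)
  apply (simp_all add: numeral_eq_Suc power_add mult_ac)
  done

lemma phi_S2: "(q::'k::field) \<noteq> 0 \<Longrightarrow> phi q (S2f q) v = (\<lambda>i k j. 0)"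
  apply (simp add: I2 phi_diff phi_sm phi_mult phi_W phi_E2)
  apply (simp add: fun_eq_iff opdefs split: nat.split)
  apply (auto simp: field_simps)
  apply (simp_all add: numeral_eq_Suc power_add mult_ac)
  done

lemma Abs_mult: "a \<in> nc_carrier \<Longrightarrow> b \<in> nc_carrier \<Longrightarrow> Abs_fa (a \<otimes> b) = Abs_fa a * Abs_fa b"
  by (metis Abs_fa_inverse Rep_fa_inverse Rep_mult)

lemma Abs_add: "a \<in> nc_carrier \<Longrightarrow> b \<in> nc_carrier \<Longrightarrow> Abs_fa (a \<oplus> b) = Abs_fa a + Abs_fa b"
  by (metis Abs_fa_inverse Rep_fa_inverse Rep_fun_simps(1))

lemma Abs_zero: "Abs_fa nc_zero = 0"
  by (metis Rep_fa_inverse Rep_fun_simps(4))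

lemma phi_ideal_aux:
  assumes "f \<in> nc_ideal {S1 q, S2 q, zprime q}" "(q::'k::field) \<noteq> 0"
  shows "f \<in> nc_carrier \<and> (\<forall>v. phi q (Abs_fa f) v = (\<lambda>i k j. 0))"
  using assms(1)
proof (induction rule: nc_ideal.induct)
  case zero
  then show ?case by (simp add: carrier_zero Abs_zero phi_zero)
next
  case (gen s a b)
  have s: "s \<in> nc_carrier \<and> (\<forall>v. phi q (Abs_fa s) v = (\<lambda>i k j. 0))"
    using gen(1) assms(2)
    by (auto simp flip: Rep_S1f Rep_S2f Rep_Zp simp: Rep_fa Rep_fa_inverse phi_S1 phi_S2 phi_Zp)
  then have c: "a \<otimes> s \<otimes> b \<in> nc_carrier" using gen by (simp add: carrier_mul)
  have "Abs_fa (a \<otimes> s \<otimes> b) = Abs_fa a * Abs_fa s * Abs_fa b"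
    using gen s by (simp add: Abs_mult carrier_mul)
  then have "phi q (Abs_fa (a \<otimes> s \<otimes> b)) v = (\<lambda>i k j. 0)" for v
    using s by (simp add: phi_mult lin_zero[OF lin_phi])
  then show ?case using c by simp
next
  case (add x y)
  then show ?case by (simp add: carrier_add Abs_add phi_add)
qed

lemma phi_J: "x \<in> Jq q \<Longrightarrow> (q::'k::field) \<noteq> 0 \<Longrightarrow> phi q x v = (\<lambda>i k j. 0)"
  using phi_ideal_aux[of "Rep_fa x" q] by (simp add: Jq_def Iq_def Rep_fa_inverse)

definition dl :: "nat \<Rightarrow> nat \<Rightarrow> nat \<Rightarrow> 'k::field vc" where
  "dl a b c = (\<lambda>i k j. if i = a \<and> k = b \<and> j = c then 1 else 0)"

definition vec :: "'k::field \<Rightarrow> 'k fa \<Rightarrow> 'k vc" where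
  "vec q x = phi q x (dl 0 0 0)"

definition sc :: "'k::field \<Rightarrow> 'k vc \<Rightarrow> 'k vc" where
  "sc c v = (\<lambda>i k j. c * v i k j)"

lemma lin_sc: "lin T \<Longrightarrow> T (sc c v) = sc c (T v)"
  unfolding lin_def sc_def by blast

lemma Lx_dl: "Lx (dl a b c) = dl (Suc a) b c"
  by (auto simp: fun_eq_iff Lx_def dl_def split: nat.split)

lemma Ly_dl: "Ly q (dl a b c) = sc (q ^ (2 * a) * inverse q ^ (2 * b)) (dl a b (Suc c))"
  by (auto simp: fun_eq_iff Ly_def dl_def sc_def split: nat.split)

lemma Lu_dl: "Lu q (dl a b c) = sc (inverse q ^ (4 * a)) (dl a (Suc b) c)"
  by (auto simp: fun_eq_iff Lu_def dl_def sc_def split: nat.split)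

lemma sc_sc: "sc c (sc d v) = sc (c * d) v"
  by (simp add: sc_def mult.assoc)

lemma phi_pow: "phi q (x ^ n) v = (phi q x ^^ n) v"
  by (induction n arbitrary: v) (simp_all add: phi_one phi_mult)

lemma lin_Lx_sc: "Lx (sc c v) = sc c (Lx v)" and lin_Ly_sc: "Ly q (sc c v) = sc c (Ly q v)"
  and lin_Lu_sc: "Lu q (sc c v) = sc c (Lu q v)"
  by (simp_all add: lin_sc lin_ops)

lemma E1pow_dl: "(phi q E1 ^^ n) (dl a b c) = dl (a + n) b c"
  by (induction n) (simp_all add: phi_E1 Lx_dl)

lemma phi_E3_sc: "(q::'k::field) \<noteq> 0 \<Longrightarrow> phi q (E3 q) v = sc (1 - q^4) (Lx (Ly q v))"
  by (simp add: phi_E3 sc_def)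

lemma phi_W_sc: "(q::'k::field) \<noteq> 0 \<Longrightarrow> phi q (Wf q) v = sc ((1 - q^4) * (q^2 - 1)) (Lx (Ly q (Ly q v)))"
  by (simp add: phi_W sc_def)

lemma phi_Z_sc: "(q::'k::field) \<noteq> 0 \<Longrightarrow>
  phi q (Zf q) v = sc ((1 - q^4) * (inverse q ^ 2 - 1)) (Lx (Lu q (Ly q (Ly q v))))"
  by (simp add: phi_Z sc_def)

lemma E3_dl: "(q::'k::field) \<noteq> 0 \<Longrightarrow>
  phi q (E3 q) (dl a b c) = sc ((1 - q^4) * (q ^ (2 * a) * inverse q ^ (2 * b))) (dl (Suc a) b (Suc c))"
  by (simp add: phi_E3_sc Ly_dl lin_Lx_sc Lx_dl sc_sc)

lemma W_dl: "(q::'k::field) \<noteq> 0 \<Longrightarrow>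
  phi q (Wf q) (dl a b c) = sc ((1 - q^4) * (q^2 - 1) * ((q ^ (2 * a) * inverse q ^ (2 * b)) * (q ^ (2 * a) * inverse q ^ (2 * b))))
     (dl (Suc a) b (Suc (Suc c)))"
  by (simp add: phi_W_sc Ly_dl lin_Lx_sc lin_Ly_sc Lx_dl sc_sc mult.assoc)

lemma Z_dl: "(q::'k::field) \<noteq> 0 \<Longrightarrow>
  phi q (Zf q) (dl a b c) = sc ((1 - q^4) * (inverse q ^ 2 - 1) * (inverse q ^ (4 * a) * ((q ^ (2 * a) * inverse q ^ (2 * b)) * (q ^ (2 * a) * inverse q ^ (2 * b)))))
     (dl (Suc a) (Suc b) (Suc (Suc c)))"
  by (simp add: phi_Z_sc Ly_dl Lu_dl lin_Lx_sc lin_Ly_sc lin_Lu_sc Lx_dl sc_sc mult_ac)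

lemma E2pow_dl:
  assumes q: "(q::'k::field) \<noteq> 0"
  shows "(\<forall>i k j. (phi q E2 ^^ n) (dl a b d) i k j \<noteq> 0 \<longrightarrow> i = a \<and> j = d + n \<and> b \<le> k \<and> k \<le> b + n)
     \<and> (phi q E2 ^^ n) (dl a b d) a (b + n) (d + n) \<noteq> 0"
proof (induction n)
  case 0
  then show ?case by (simp add: dl_def)
next
  case (Suc n)
  define g where "g = (phi q E2 ^^ n) (dl a b d)"
  have hs: "(phi q E2 ^^ Suc n) (dl a b d) = phi q E2 g" by (simp add: g_def)
  have eq: "phi q E2 g i k j = (case j of 0 \<Rightarrow> 0 | Suc j' \<Rightarrow>
      q ^ (2 * i) * inverse q ^ (2 * k) * g i k j' +
      (case k of 0 \<Rightarrow> 0 | Suc k' \<Rightarrow> inverse q ^ (4 * i) * (q ^ (2 * i) * inverse q ^ (2 * k') * g i k' j')))"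
    for i k j
    by (simp add: phi_E2 Ly_def Lu_def split: nat.split)
  have IH1: "g i k j \<noteq> 0 \<Longrightarrow> i = a \<and> j = d + n \<and> b \<le> k \<and> k \<le> b + n" for i k j
    using Suc.IH unfolding g_def by blast
  have IH2: "g a (b + n) (d + n) \<noteq> 0" using Suc.IH unfolding g_def by blast
  have supp: "i = a \<and> j = d + Suc n \<and> b \<le> k \<and> k \<le> b + Suc n"
    if nz: "phi q E2 g i k j \<noteq> 0" for i k j
  proof (cases j)
    case 0 then show ?thesis using nz by (simp add: eq)
  next
    case (Suc j')
    show ?thesis
    proof (cases "g i k j' \<noteq> 0")
      case True then show ?thesis using IH1[OF True] Suc by auto
    next
      case False
      then obtain k' where k: "k = Suc k'" "g i k' j' \<noteq> 0"
        using nz Suc by (cases k) (auto simp: eq)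
      then show ?thesis using IH1[OF k(2)] Suc by auto
    qed
  qed
  have "g a (Suc (b + n)) (d + n) = 0" using IH1[of a "Suc (b + n)" "d + n"] by auto
  then have "phi q E2 g a (b + Suc n) (d + Suc n) =
     inverse q ^ (4 * a) * (q ^ (2 * a) * inverse q ^ (2 * (b + n)) * g a (b + n) (d + n))"
    by (simp add: eq)
  also have "\<dots> \<noteq> 0" using IH2 q by simp
  finally show ?case unfolding hs using supp by blast
qed

lemma Wpow_dl: "(q::'k::field) \<noteq> 0 \<Longrightarrow> q^4 \<noteq> 1 \<Longrightarrow> q^2 \<noteq> 1 \<Longrightarrow>
  \<exists>C. C \<noteq> 0 \<and> (phi q (Wf q) ^^ m) (dl a b d) = sc C (dl (a + m) b (d + 2 * m))"
proof (induction m)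
  case 0 show ?case by (intro exI[of _ 1]) (simp add: sc_def)
next
  case (Suc m)
  then obtain C where C: "C \<noteq> 0" "(phi q (Wf q) ^^ m) (dl a b d) = sc C (dl (a + m) b (d + 2 * m))" by blast
  have "(phi q (Wf q) ^^ Suc m) (dl a b d) = sc C (phi q (Wf q) (dl (a + m) b (d + 2 * m)))"
    using C by (simp add: lin_sc[OF lin_phi])
  also have "\<dots> = sc (C * ((1 - q^4) * (q^2 - 1) * ((q ^ (2 * (a + m)) * inverse q ^ (2 * b)) * (q ^ (2 * (a + m)) * inverse q ^ (2 * b)))))
     (dl (a + Suc m) b (d + 2 * Suc m))"
    using Suc.prems by (simp add: W_dl sc_sc)
  finally show ?case using C Suc.prems by (intro exI[of _ "C * ((1 - q^4) * (q^2 - 1) * ((q ^ (2 * (a + m)) * inverse q ^ (2 * b)) * (q ^ (2 * (a + m)) * inverse q ^ (2 * b))))"]) auto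
qed

definition ev :: "bool \<Rightarrow> nat" where "ev e = (if e then 1 else 0)"

lemma vec_BB: assumes q: "(q::'k::field) \<noteq> 0" "q^4 \<noteq> 1" "q^2 \<noteq> 1"
  shows "\<exists>C. C \<noteq> 0 \<and> vec q (BB q a m e c) = sc C ((phi q E2 ^^ a) (dl (m + ev e + c) 0 (2 * m + ev e)))"
proof -
  have v: "vec q (BB q a m e c) = (phi q E2 ^^ a) ((phi q (Wf q) ^^ m) (phi q (if e then E3 q else 1) (dl c 0 0)))"
    by (simp add: vec_def BB_def Ym_def phi_mult phi_pow E1pow_dl)
  obtain C1 where C1: "C1 \<noteq> 0" "phi q (if e then E3 q else 1) (dl c 0 0) = sc C1 (dl (c + ev e) 0 (ev e))"
  proof (cases e)
    case True
    then show ?thesis using that[of "(1 - q^4) * (q ^ (2 * c) * inverse q ^ (2 * 0))"] q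
      by (simp add: E3_dl ev_def)
  next
    case False
    then show ?thesis using that[of 1] by (simp add: phi_one ev_def sc_def)
  qed
  obtain C2 where C2: "C2 \<noteq> 0" "(phi q (Wf q) ^^ m) (dl (c + ev e) 0 (ev e)) = sc C2 (dl (c + ev e + m) 0 (ev e + 2 * m))"
    using Wpow_dl[OF q(1) q(2) q(3)] by blast
  have l1: "lin (phi q (Wf q) ^^ m)" using lin_phi[of q "Wf q ^ m"] by (simp add: phi_pow[abs_def])
  have l2: "lin (phi q E2 ^^ a)" using lin_phi[of q "E2 ^ a"] by (simp add: phi_pow[abs_def])
  have "vec q (BB q a m e c) = sc (C1 * C2) ((phi q E2 ^^ a) (dl (c + ev e + m) 0 (ev e + 2 * m)))"
    by (simp add: v C1 lin_sc[OF l1] C2 lin_sc[OF l2] sc_sc)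
  then show ?thesis using C1 C2 by (intro exI[of _ "C1 * C2"]) (simp add: ac_simps)
qed

lemma vec_BB_supp: assumes q: "(q::'k::field) \<noteq> 0" "q^4 \<noteq> 1" "q^2 \<noteq> 1"
  and nz: "vec q (BB q a m e c) i k j \<noteq> 0"
  shows "i = m + ev e + c \<and> j = 2 * m + ev e + a \<and> k \<le> a"
proof -
  obtain C where C: "C \<noteq> 0" "vec q (BB q a m e c) = sc C ((phi q E2 ^^ a) (dl (m + ev e + c) 0 (2 * m + ev e)))"
    using vec_BB[OF q] by blast
  then have "(phi q E2 ^^ a) (dl (m + ev e + c) 0 (2 * m + ev e)) i k j \<noteq> 0"
    using nz by (simp add: sc_def)
  then show ?thesis using E2pow_dl[OF q(1), of a "m + ev e + c" 0 "2 * m + ev e"] by auto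
qed

lemma vec_BB_lead: assumes q: "(q::'k::field) \<noteq> 0" "q^4 \<noteq> 1" "q^2 \<noteq> 1"
  shows "vec q (BB q a m e c) (m + ev e + c) a (2 * m + ev e + a) \<noteq> 0"
proof -
  obtain C where C: "C \<noteq> 0" "vec q (BB q a m e c) = sc C ((phi q E2 ^^ a) (dl (m + ev e + c) 0 (2 * m + ev e)))"
    using vec_BB[OF q] by blast
  then show ?thesis using E2pow_dl[OF q(1), of a "m + ev e + c" 0 "2 * m + ev e"] by (simp add: sc_def)
qed

definition BBt :: "'k::field \<Rightarrow> nat \<times> nat \<times> bool \<times> nat \<Rightarrow> 'k fa" where
  "BBt q \<beta> = (case \<beta> of (a, m, e, c) \<Rightarrow> BB q a m e c)"

lemma linB_repr:
  assumes "y \<in> linB q"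
  shows "\<exists>F cf. finite F \<and> (\<forall>\<beta>. \<beta> \<notin> F \<longrightarrow> cf \<beta> = 0) \<and> y = (\<Sum>\<beta>\<in>F. sm (cf \<beta>) (BBt q \<beta>))"
  using assms
proof (induction rule: linB.induct)
  case lzero
  show ?case by (intro exI[of _ "{}"] exI[of _ "\<lambda>_. 0"]) simp
next
  case (lbase a m e c)
  show ?case
    by (intro exI[of _ "{(a, m, e, c)}"] exI[of _ "\<lambda>\<beta>. if \<beta> = (a, m, e, c) then 1 else 0"])
       (simp add: BBt_def)
next
  case (ladd x y)
  then obtain F1 cf1 F2 cf2 where
    h: "finite F1" "\<forall>\<beta>. \<beta> \<notin> F1 \<longrightarrow> cf1 \<beta> = 0" "x = (\<Sum>\<beta>\<in>F1. sm (cf1 \<beta>) (BBt q \<beta>))"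
       "finite F2" "\<forall>\<beta>. \<beta> \<notin> F2 \<longrightarrow> cf2 \<beta> = 0" "y = (\<Sum>\<beta>\<in>F2. sm (cf2 \<beta>) (BBt q \<beta>))"
    by blast
  have s1: "(\<Sum>\<beta>\<in>F1 \<union> F2. sm (cf1 \<beta>) (BBt q \<beta>)) = (\<Sum>\<beta>\<in>F1. sm (cf1 \<beta>) (BBt q \<beta>))"
    by (rule sum.mono_neutral_right) (use h in auto)
  have s2: "(\<Sum>\<beta>\<in>F1 \<union> F2. sm (cf2 \<beta>) (BBt q \<beta>)) = (\<Sum>\<beta>\<in>F2. sm (cf2 \<beta>) (BBt q \<beta>))"
    by (rule sum.mono_neutral_right) (use h in auto)
  have "x + y = (\<Sum>\<beta>\<in>F1 \<union> F2. sm (cf1 \<beta> + cf2 \<beta>) (BBt q \<beta>))"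
    by (simp add: add_sm sum.distrib s1 s2 h(3) h(6))
  then show ?case using h by (intro exI[of _ "F1 \<union> F2"] exI[of _ "\<lambda>\<beta>. cf1 \<beta> + cf2 \<beta>"]) auto
next
  case (lsm x c)
  then obtain F cf where
    h: "finite F" "\<forall>\<beta>. \<beta> \<notin> F \<longrightarrow> cf \<beta> = 0" "x = (\<Sum>\<beta>\<in>F. sm (cf \<beta>) (BBt q \<beta>))"
    by blast
  have "sm c x = (\<Sum>\<beta>\<in>F. sm (c * cf \<beta>) (BBt q \<beta>))"
    by (simp add: h(3) sm_sum)
  then show ?case using h by (intro exI[of _ F] exI[of _ "\<lambda>\<beta>. c * cf \<beta>"]) auto
qed

lemma ev_cases: "ev e = 0 \<or> ev e = 1"
  by (simp add: ev_def)

lemma ev_inj: "2 * m + ev e = 2 * m' + ev e' \<Longrightarrow> m = m' \<and> e = e'"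
  by (cases e; cases e'; simp add: ev_def; presburger)

lemma IL:
  assumes q: "(q::'k::field) \<noteq> 0" "q^4 \<noteq> 1" "q^2 \<noteq> 1"
    and y: "y \<in> linB q" and v: "vec q y = (\<lambda>i k j. 0)"
  shows "y = 0"
proof -
  obtain F cf where h: "finite F" "\<forall>\<beta>. \<beta> \<notin> F \<longrightarrow> cf \<beta> = 0" "y = (\<Sum>\<beta>\<in>F. sm (cf \<beta>) (BBt q \<beta>))"
    using linB_repr[OF y] by blast
  have vy: "vec q y i k j = (\<Sum>\<beta>\<in>F. cf \<beta> * vec q (BBt q \<beta>) i k j)" for i k j
    by (simp add: h(3) vec_def phi_setsum[OF h(1)] phi_sm)
  have all0: "\<forall>\<beta>\<in>F. cf \<beta> = 0"
  proof (rule ccontr)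
    assume nall: "\<not> (\<forall>\<beta>\<in>F. cf \<beta> = 0)"
    define G where "G = {\<beta>\<in>F. cf \<beta> \<noteq> 0}"
    have G: "finite G" "G \<noteq> {}" using h(1) nall by (auto simp: G_def)
    define A where "A = Max (fst ` G)"
    have "A \<in> fst ` G" unfolding A_def using G by (intro Max_in) auto
    then obtain a0 m0 e0 c0 where b0: "(a0, m0, e0, c0) \<in> G" "a0 = A" by force
    have maxA: "a \<le> A" if "(a, m, e, c) \<in> G" for a m e c
      unfolding A_def using G that by (intro Max_ge) force+
    define P1 where "P1 = m0 + ev e0 + c0"
    define P3 where "P3 = 2 * m0 + ev e0 + a0"
    have others: "cf \<beta> * vec q (BBt q \<beta>) P1 a0 P3 = 0" if "\<beta> \<in> F - {(a0, m0, e0, c0)}" for \<beta>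
    proof (cases "cf \<beta> = 0")
      case False
      obtain a m e c where bt: "\<beta> = (a, m, e, c)" by (cases \<beta>) auto
      have inG: "(a, m, e, c) \<in> G" using that False bt by (auto simp: G_def)
      show ?thesis
      proof (rule ccontr)
        assume "cf \<beta> * vec q (BBt q \<beta>) P1 a0 P3 \<noteq> 0"
        then have "vec q (BB q a m e c) P1 a0 P3 \<noteq> 0" by (simp add: bt BBt_def)
        from vec_BB_supp[OF q this] have eqs: "P1 = m + ev e + c" "P3 = 2 * m + ev e + a" "a0 \<le> a" by auto
        have "a = a0" using eqs(3) maxA[OF inG] b0(2) by simp
        then have "2 * m0 + ev e0 = 2 * m + ev e" using eqs(2) by (simp add: P3_def)
        then have "m = m0" "e = e0" using ev_inj by metis+
        then have "c = c0" using eqs(1) by (simp add: P1_def)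
        then show False using that bt \<open>a = a0\<close> \<open>m = m0\<close> \<open>e = e0\<close> by simp
      qed
    qed simp
    have inF: "(a0, m0, e0, c0) \<in> F" using b0 by (simp add: G_def)
    have "vec q y P1 a0 P3 = cf (a0, m0, e0, c0) * vec q (BBt q (a0, m0, e0, c0)) P1 a0 P3"
    proof -
      have z: "(\<Sum>\<beta>\<in>F - {(a0, m0, e0, c0)}. cf \<beta> * vec q (BBt q \<beta>) P1 a0 P3) = 0"
        by (rule sum.neutral) (use others in blast)
      show ?thesis unfolding vy by (simp add: sum.remove[OF h(1) inF] z)
    qed
    also have "\<dots> \<noteq> 0"
      using b0 vec_BB_lead[OF q, of a0 m0 e0 c0] by (simp add: G_def BBt_def P1_def P3_def)
    finally show False using v by simp
  qed
  then show ?thesis by (simp add: h(3))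
qed

lemma FL:
  assumes q: "(q::'k::field) \<noteq> 0" "q^4 \<noteq> 1" "q^2 \<noteq> 1"
    and v: "vec q x = (\<lambda>i k j. 0)"
  shows "x \<in> Jq q"
proof -
  obtain y where y: "y \<in> linB q" "eqv q x y" using good_all[OF q(1) q(3)] unfolding good_def by blast
  have "vec q (x - y) = (\<lambda>i k j. 0)" using y(2) q(1) by (simp add: eqv_def vec_def phi_J)
  then have "vec q y = (\<lambda>i k j. 0)" using v by (simp add: vec_def phi_diff fun_eq_iff)
  then have "y = 0" by (rule IL[OF q y(1)])
  then show ?thesis using y(2) by (simp add: eqv_def)
qed

lemma R_comm1: "(q::'k::field) \<noteq> 0 \<Longrightarrow> Rx q (Lx v) = Lx (Rx q v)"
  apply (simp add: fun_eq_iff opdefs split: nat.split)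
  apply ((auto simp: field_simps)[1])?
  apply (simp_all add: numeral_eq_Suc power_add mult_ac)?
  done

lemma R_comm2: "(q::'k::field) \<noteq> 0 \<Longrightarrow> Rx q (Ly q v) = Ly q (Rx q v)"
  apply (simp add: fun_eq_iff opdefs split: nat.split)
  apply ((auto simp: field_simps)[1])?
  apply (simp_all add: numeral_eq_Suc power_add mult_ac)?
  done

lemma R_comm3: "(q::'k::field) \<noteq> 0 \<Longrightarrow> Rx q (Lu q v) = Lu q (Rx q v)"
  apply (simp add: fun_eq_iff opdefs split: nat.split)
  apply ((auto simp: field_simps)[1])?
  apply (simp_all add: numeral_eq_Suc power_add mult_ac)?
  done

lemma R_comm4: "(q::'k::field) \<noteq> 0 \<Longrightarrow> Ry (Lx v) = Lx (Ry v)"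
  apply (simp add: fun_eq_iff opdefs split: nat.split)
  apply ((auto simp: field_simps)[1])?
  apply (simp_all add: numeral_eq_Suc power_add mult_ac)?
  done

lemma R_comm5: "(q::'k::field) \<noteq> 0 \<Longrightarrow> Ry (Ly q v) = Ly q (Ry v)"
  apply (simp add: fun_eq_iff opdefs split: nat.split)
  apply ((auto simp: field_simps)[1])?
  apply (simp_all add: numeral_eq_Suc power_add mult_ac)?
  done

lemma R_comm6: "(q::'k::field) \<noteq> 0 \<Longrightarrow> Ry (Lu q v) = Lu q (Ry v)"
  apply (simp add: fun_eq_iff opdefs split: nat.split)
  apply ((auto simp: field_simps)[1])?
  apply (simp_all add: numeral_eq_Suc power_add mult_ac)?
  done

lemma R_comm7: "(q::'k::field) \<noteq> 0 \<Longrightarrow> Ru q (Lx v) = Lx (Ru q v)"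
  apply (simp add: fun_eq_iff opdefs split: nat.split)
  apply ((auto simp: field_simps)[1])?
  apply (simp_all add: numeral_eq_Suc power_add mult_ac)?
  done

lemma R_comm8: "(q::'k::field) \<noteq> 0 \<Longrightarrow> Ru q (Ly q v) = Ly q (Ru q v)"
  apply (simp add: fun_eq_iff opdefs split: nat.split)
  apply ((auto simp: field_simps)[1])?
  apply (simp_all add: numeral_eq_Suc power_add mult_ac)?
  done

lemma R_comm9: "(q::'k::field) \<noteq> 0 \<Longrightarrow> Ru q (Lu q v) = Lu q (Ru q v)"
  apply (simp add: fun_eq_iff opdefs split: nat.split)
  apply ((auto simp: field_simps)[1])?
  apply (simp_all add: numeral_eq_Suc power_add mult_ac)?
  done

lemmas R_comm = R_comm1 R_comm2 R_comm3 R_comm4 R_comm5 R_comm6 R_comm7 R_comm8 R_comm9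

lemma comm_phi:
  assumes l: "lin R" and c1: "\<And>v. R (Lx v) = Lx (R v)" and c2: "\<And>v. R (Ly q v) = Ly q (R v)"
    and c3: "\<And>v. R (Lu q v) = Lu q (R v)"
  shows "R (phi q x v) = phi q x (R v)"
proof -
  have add: "R (\<lambda>i k j. a i k j + b i k j) = (\<lambda>i k j. R a i k j + R b i k j)" for a b
    using l unfolding lin_def by blast
  have g: "R (opg q g w) = opg q g (R w)" for g w
    by (cases g) (simp_all add: opg_def c1 add c2 c3)
  have w: "R (opw q u w) = opw q u (R w)" for u w
    by (induction u) (simp_all add: g)
  show ?thesis unfolding phi_def by (simp add: lin_sum[OF l finite_supp] w)
qed

lemma vec_x_E1: "(q::'k::field) \<noteq> 0 \<Longrightarrow> vec q (x * E1) = Rx q (vec q x)"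
proof -
  assume q: "q \<noteq> 0"
  have "phi q E1 (dl 0 0 0) = Rx q (dl 0 0 0)"
    apply (auto simp: phi_E1 fun_eq_iff Lx_def Rx_def dl_def split: nat.split)[1]
    using gr0I by force
  then show ?thesis
    by (simp add: vec_def phi_mult comm_phi[OF lin_ops(4) R_comm(1-3)[OF q]])
qed

lemma vec_E1_x: "vec q (E1 * x) = Lx (vec q x)"
  by (simp add: vec_def phi_mult phi_E1)

lemma vec_x_E2: "(q::'k::field) \<noteq> 0 \<Longrightarrow>
  vec q (x * E2) = (\<lambda>i k j. Ry (vec q x) i k j + Ry (Ru q (vec q x)) i k j)"
proof -
  assume q: "q \<noteq> 0"
  have "phi q E2 (dl 0 0 0) = (\<lambda>i k j. Ry (dl 0 0 0) i k j + Ry (Ru q (dl 0 0 0)) i k j)"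
    by (auto simp: phi_E2 fun_eq_iff Ly_def Lu_def Ry_def Ru_def dl_def split: nat.split)
  moreover have "phi q x (\<lambda>i k j. a i k j + b i k j) = (\<lambda>i k j. phi q x a i k j + phi q x b i k j)" for a b
    using lin_phi[of q x] unfolding lin_def by blast
  ultimately show ?thesis
    by (simp add: vec_def phi_mult comm_phi[OF lin_ops(5) R_comm(4-6)[OF q]]
        comm_phi[OF lin_ops(6) R_comm(7-9)[OF q]])
qed

lemma vec_E2_x: "vec q (E2 * x) = (\<lambda>i k j. Ly q (vec q x) i k j + Lu q (Ly q (vec q x)) i k j)"
  by (simp add: vec_def phi_mult phi_E2)

lemma pow_inj:
  assumes q: "(q::'k::field) \<noteq> 0" "\<forall>n::nat. n > 0 \<longrightarrow> q ^ n \<noteq> 1" and e: "q ^ a = q ^ b"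
  shows "a = b"
proof (rule ccontr)
  assume ne: "a \<noteq> b"
  show False
  proof (cases "a < b")
    case True
    then have "q ^ b = q ^ a * q ^ (b - a)" by (simp flip: power_add)
    then have "q ^ (b - a) = 1" using e q(1) by simp
    then show False using q(2) True by auto
  next
    case False
    then have "b < a" using ne by simp
    then have "q ^ a = q ^ b * q ^ (a - b)" by (simp flip: power_add)
    then have "q ^ (a - b) = 1" using e q(1) by simp
    then show False using q(2) \<open>b < a\<close> by auto
  qed
qed

lemma pow_ratio:
  assumes q: "(q::'k::field) \<noteq> 0" "\<forall>n::nat. n > 0 \<longrightarrow> q ^ n \<noteq> 1"
    and e: "q ^ a * inverse q ^ b = 1"
  shows "a = b"
proof -
  have "q ^ a = q ^ b" using e q(1) by (simp add: power_inverse field_simps)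
  then show ?thesis by (rule pow_inj[OF q])
qed

lemma Zpow_dl: assumes q: "(q::'k::field) \<noteq> 0" "q^4 \<noteq> 1" "q^2 \<noteq> 1"
  shows "\<exists>C. C \<noteq> 0 \<and> (phi q (Zf q) ^^ n) (dl a b d) = sc C (dl (a + n) (b + n) (d + 2 * n))"
proof (induction n)
  case 0 show ?case by (intro exI[of _ 1]) (simp add: sc_def)
next
  case (Suc n)
  then obtain C where C: "C \<noteq> 0" "(phi q (Zf q) ^^ n) (dl a b d) = sc C (dl (a + n) (b + n) (d + 2 * n))" by blast
  define D where "D = (1 - q^4) * (inverse q ^ 2 - 1) * (inverse q ^ (4 * (a + n)) * ((q ^ (2 * (a + n)) * inverse q ^ (2 * (b + n))) * (q ^ (2 * (a + n)) * inverse q ^ (2 * (b + n)))))"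
  have "inverse q ^ 2 \<noteq> 1"
  proof
    assume "inverse q ^ 2 = 1"
    then have "q ^ 2 = 1" using q(1) by (simp add: power_inverse field_simps)
    then show False using q(3) by simp
  qed
  then have D: "D \<noteq> 0" using q by (simp add: D_def)
  have "(phi q (Zf q) ^^ Suc n) (dl a b d) = sc C (phi q (Zf q) (dl (a + n) (b + n) (d + 2 * n)))"
    using C by (simp add: lin_sc[OF lin_phi])
  also have "\<dots> = sc (C * D) (dl (a + Suc n) (b + Suc n) (d + 2 * Suc n))"
    using q by (simp add: Z_dl sc_sc D_def)
  finally show ?case using C D by (intro exI[of _ "C * D"]) simp
qed

definition gam :: "'k::field \<Rightarrow> nat \<Rightarrow> 'k" where
  "gam q n = vec q (Zf q ^ n) n n (2 * n)"

lemma vecZ: assumes q: "(q::'k::field) \<noteq> 0" "q^4 \<noteq> 1" "q^2 \<noteq> 1"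
  shows "vec q (Zf q ^ n) i k j = (if i = n \<and> k = n \<and> j = 2 * n then gam q n else 0)"
    and "gam q n \<noteq> 0"
proof -
  obtain C where C: "C \<noteq> 0" "(phi q (Zf q) ^^ n) (dl 0 0 0) = sc C (dl n n (2 * n))"
    using Zpow_dl[OF q, of n 0 0 0] by auto
  have v: "vec q (Zf q ^ n) = sc C (dl n n (2 * n))"
    by (simp add: vec_def phi_pow C)
  show "vec q (Zf q ^ n) i k j = (if i = n \<and> k = n \<and> j = 2 * n then gam q n else 0)"
    by (simp add: v gam_def sc_def dl_def)
  show "gam q n \<noteq> 0" using C by (simp add: v gam_def sc_def dl_def)
qed

definition PZ :: "'k::field \<Rightarrow> 'k poly \<Rightarrow> 'k fa" where
  "PZ q p = (\<Sum>n\<le>degree p. sm (coeff p n) (Zf q ^ n))"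

lemma Rep_PZ: "Rep_fa (PZ q p) = nc_peval p (zz q)"
  by (simp add: fun_eq_iff PZ_def nc_peval_def Rep_sum Rep_pow Rep_Zf)

lemma vec_PZ: assumes q: "(q::'k::field) \<noteq> 0" "q^4 \<noteq> 1" "q^2 \<noteq> 1"
  shows "vec q (PZ q p) i k j = (if k = i \<and> j = 2 * i then coeff p i * gam q i else 0)"
proof -
  have "vec q (PZ q p) i k j = (\<Sum>n\<le>degree p. coeff p n * vec q (Zf q ^ n) i k j)"
    by (simp add: PZ_def vec_def phi_setsum phi_sm)
  also have "\<dots> = (\<Sum>n\<le>degree p. if n = i then (if k = i \<and> j = 2 * i then coeff p i * gam q i else 0) else 0)"
    by (rule sum.cong) (auto simp: vecZ(1)[OF q])
  also have "\<dots> = (if k = i \<and> j = 2 * i then coeff p i * gam q i else 0)"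
    by (auto simp: coeff_eq_0 not_le)
  finally show ?thesis .
qed

lemma opw_bound:
  assumes "\<forall>i k j. v i k j \<noteq> 0 \<longrightarrow> i \<le> M"
  shows "opw q u v i k j \<noteq> 0 \<Longrightarrow> i \<le> M + length u"
proof (induction u arbitrary: i k j)
  case Nil then show ?case using assms by fastforce
next
  case (Cons g u)
  show ?case
  proof (cases g)
    case G1
    then obtain i' where "i = Suc i'" "opw q u v i' k j \<noteq> 0"
      using Cons.prems by (cases i) (auto simp: opg_def Lx_def)
    then show ?thesis using Cons.IH by fastforce
  next
    case G2
    have "\<exists>k' j'. opw q u v i k' j' \<noteq> 0"
    proof (rule ccontr)
      assume "\<not> (\<exists>k' j'. opw q u v i k' j' \<noteq> 0)"
      then have all0: "\<And>k' j'. opw q u v i k' j' = 0" by blast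
      have "opw q (g # u) v i k j = 0"
        using G2 by (simp add: opg_def Ly_def Lu_def all0 split: nat.split)
      then show False using Cons.prems by simp
    qed
    then show ?thesis using Cons.IH by fastforce
  qed
qed

lemma vec_bound: "\<exists>N. \<forall>i k j. vec q x i k j \<noteq> 0 \<longrightarrow> i < N"
proof -
  define N where "N = Suc (Max (insert 0 (length ` supp x)))"
  have "i < N" if nz: "vec q x i k j \<noteq> 0" for i k j
  proof -
    obtain u where u: "u \<in> supp x" "opw q u (dl 0 0 0) i k j \<noteq> 0"
      using nz unfolding vec_def phi_def by (auto elim: sum.not_neutral_contains_not_neutral)
    have "i \<le> 0 + length u" by (rule opw_bound[OF _ u(2)]) (simp add: dl_def)
    moreover have "length u \<le> Max (insert 0 (length ` supp x))"
      using u(1) finite_supp by (intro Max_ge) auto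
    ultimately show ?thesis by (simp add: N_def)
  qed
  then show ?thesis by blast
qed

lemma vec_diff: "vec q (x - y) i k j = vec q x i k j - vec q y i k j"
  by (simp add: vec_def phi_diff)

lemma center_char:
  assumes q: "(q::'k::field) \<noteq> 0" "\<forall>n::nat. n > 0 \<longrightarrow> q ^ n \<noteq> 1"
    and h1: "x * E1 - E1 * x \<in> Jq q" and h2: "x * E2 - E2 * x \<in> Jq q"
  shows "\<exists>p. x - PZ q p \<in> Jq q"
proof -
  have q2: "q^2 \<noteq> 1" "q^4 \<noteq> 1" using q(2) by auto
  define v where "v = vec q x"
  have z1: "vec q (x * E1 - E1 * x) i k j = 0" for i k j
    by (simp add: vec_def phi_J[OF h1 q(1)])
  have e1: "Rx q v i k j = Lx v i k j" for i k j
    using z1[of i k j] by (simp add: vec_diff vec_x_E1[OF q(1)] vec_E1_x v_def)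
  have s1: "j = 2 * k" if nz: "v i k j \<noteq> 0" for i k j
  proof -
    have "q ^ (2 * j) * inverse q ^ (4 * k) * v i k j = v i k j"
      using e1[of "Suc i" k j] by (simp add: Rx_def Lx_def)
    then have "q ^ (2 * j) * inverse q ^ (4 * k) = 1" using nz by simp
    then have "2 * j = 4 * k" by (rule pow_ratio[OF q])
    then show ?thesis by simp
  qed
  have z2: "vec q (x * E2 - E2 * x) i k j = 0" for i k j
    by (simp add: vec_def phi_J[OF h2 q(1)])
  have e2: "Ry v i k j + Ry (Ru q v) i k j = Ly q v i k j + Lu q (Ly q v) i k j" for i k j
    using z2[of i k j] by (simp add: vec_diff vec_x_E2[OF q(1)] vec_E2_x v_def)
  have s2: "k = i \<and> j = 2 * i" if nz: "v i k j \<noteq> 0" for i k j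
  proof -
    have j: "j = 2 * k" by (rule s1[OF nz])
    have zero: "v i k' (Suc (Suc (2 * k'))) = 0" for k'
      using s1[of i k' "Suc (Suc (2 * k'))"] by auto
    have "v i k (2 * k) = q ^ (2 * i) * inverse q ^ (2 * k) * v i k (2 * k)"
      using e2[of i k "Suc (2 * k)"] by (cases k) (simp_all add: opdefs zero)
    then have "q ^ (2 * i) * inverse q ^ (2 * k) = 1" using nz j by simp
    then have "2 * i = 2 * k" by (rule pow_ratio[OF q])
    then show ?thesis using j by simp
  qed
  obtain N where N: "\<And>i k j. v i k j \<noteq> 0 \<Longrightarrow> i < N"
    using vec_bound[of q x] unfolding v_def by blast
  define p where "p = (\<Sum>n<N. monom (v n n (2 * n) / gam q n) n)"
  have cp: "coeff p n = (if n < N then v n n (2 * n) / gam q n else 0)" for n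
    by (simp add: p_def coeff_sum coeff_monom)
  have vz: "vec q (x - PZ q p) i k j = 0" for i k j
  proof (cases "k = i \<and> j = 2 * i")
    case True
    show ?thesis
    proof (cases "i < N")
      case True
      then show ?thesis using \<open>k = i \<and> j = 2 * i\<close> vecZ(2)[OF q(1) q2(2) q2(1)]
        by (simp add: vec_diff vec_PZ[OF q(1) q2(2) q2(1)] cp v_def[symmetric])
    next
      case False
      then have "v i i (2 * i) = 0" using N by force
      then show ?thesis using \<open>k = i \<and> j = 2 * i\<close> False
        by (simp add: vec_diff vec_PZ[OF q(1) q2(2) q2(1)] cp v_def[symmetric])
    qed
  next
    case False
    then have "v i k j = 0" using s2 by blast
    then show ?thesis using False
      by (auto simp add: vec_diff vec_PZ[OF q(1) q2(2) q2(1)] v_def[symmetric])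
  qed
  have vz': "vec q (x - PZ q p) = (\<lambda>i k j. 0)" by (intro ext vz)
  have "x - PZ q p \<in> Jq q" by (rule FL[OF q(1) q2(2) q2(1) vz'])
  then show ?thesis by blast
qed

lemma J_setsum: "finite S \<Longrightarrow> (\<And>s. s \<in> S \<Longrightarrow> f s \<in> Jq q) \<Longrightarrow> sum f S \<in> Jq q"
  by (induction S rule: finite_induct) (simp_all add: J_zero J_add)

lemma center_Z:
  assumes q: "(q::'k::field) \<noteq> 0"
  shows "Zf q * x - x * Zf q \<in> Jq q"
proof -
  let ?P = "\<lambda>y. Zf q * y - y * Zf q \<in> Jq q"
  have P1: "?P E1" using IZ1[OF q]
    by (simp add: J_sm J_diff J_left J_right J_S1)
  have P2: "?P E2" using IZ2[OF q] by (simp add: J_sm J_S2)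
  have Pmult: "?P (a * b)" if "?P a" "?P b" for a b
  proof -
    have "Zf q * (a * b) - a * b * Zf q = (Zf q * a - a * Zf q) * b + a * (Zf q * b - b * Zf q)"
      by (simp add: algebra_simps)
    then show ?thesis using that by (simp add: J_add J_left J_right)
  qed
  have Pwd: "?P (wd u)" for u
  proof (induction u)
    case Nil then show ?case by (simp add: wd_Nil J_zero)
  next
    case (Cons g u)
    have "?P (wd [g])" using P1 P2 by (cases g) (simp_all add: E1_def E2_def)
    then have "?P (wd [g] * wd u)" by (rule Pmult[OF _ Cons])
    then show ?case by (simp only: wd_Cons[of g u, symmetric])
  qed
  have x: "x = (\<Sum>u\<in>supp x. sm (Rep_fa x u) (wd u))"
    by (rule fa_decomp[OF finite_supp subset_refl])
  have "Zf q * x - x * Zf q = (\<Sum>u\<in>supp x. sm (Rep_fa x u) (Zf q * wd u - wd u * Zf q))"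
    by (subst (1 2) x) (simp add: sum_distrib_left sum_distrib_right sm_diff sum_subtractf)
  also have "\<dots> \<in> Jq q"
    by (intro J_setsum finite_supp J_sm Pwd)
  finally show ?thesis .
qed

theorem mainTheorem14:
  fixes q :: "'k::{alg_closed_field, field_char_0}"
  assumes "q \<noteq> 0"
    and "\<forall>n::nat. n > 0 \<longrightarrow> q ^ n \<noteq> 1"
  shows "(\<forall>a\<in>nc_carrier. (zz q \<otimes> a) \<ominus> (a \<otimes> zz q) \<in> Iq q)
    \<and> (\<forall>c\<in>nc_carrier. (\<forall>a\<in>nc_carrier. (c \<otimes> a) \<ominus> (a \<otimes> c) \<in> Iq q)
          \<longrightarrow> (\<exists>p::'k poly. c \<ominus> nc_peval p (zz q) \<in> Iq q))
    \<and> (\<forall>p::'k poly. nc_peval p (zz q) \<in> Iq q \<longrightarrow> p = 0)"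
proof -
  note q = assms
  have q2: "q^2 \<noteq> 1" "q^4 \<noteq> 1" using q(2) by auto
  have P1: "(zz q \<otimes> a) \<ominus> (a \<otimes> zz q) \<in> Iq q" if a: "a \<in> nc_carrier" for a
  proof -
    have "Zf q * Abs_fa a - Abs_fa a * Zf q \<in> Jq q" by (rule center_Z[OF q(1)])
    then show ?thesis using a by (simp add: Jq_def Rep_fun_simps Rep_mult Rep_Zf Abs_fa_inverse)
  qed
  have P2: "\<exists>p::'k poly. c \<ominus> nc_peval p (zz q) \<in> Iq q"
    if c: "c \<in> nc_carrier" and h: "\<forall>a\<in>nc_carrier. (c \<otimes> a) \<ominus> (a \<otimes> c) \<in> Iq q" for c
  proof -
    have e1: "e1 \<in> nc_carrier" using Rep_fa[of E1] by (simp add: Rep_E1)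
    have e2: "e2 \<in> nc_carrier" using Rep_fa[of E2] by (simp add: Rep_E2)
    have h1: "Abs_fa c * E1 - E1 * Abs_fa c \<in> Jq q"
      using h[rule_format, OF e1] c by (simp add: Jq_def Rep_fun_simps Rep_mult Rep_E1 Abs_fa_inverse)
    have h2: "Abs_fa c * E2 - E2 * Abs_fa c \<in> Jq q"
      using h[rule_format, OF e2] c by (simp add: Jq_def Rep_fun_simps Rep_mult Rep_E2 Abs_fa_inverse)
    obtain p where "Abs_fa c - PZ q p \<in> Jq q" using center_char[OF q h1 h2] by blast
    then have "c \<ominus> nc_peval p (zz q) \<in> Iq q"
      using c by (simp add: Jq_def Rep_fun_simps Rep_PZ Abs_fa_inverse)
    then show ?thesis by blast
  qed
  have P3: "p = 0" if h: "nc_peval p (zz q) \<in> Iq q" for p :: "'k poly"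
  proof -
    have "PZ q p \<in> Jq q" using h by (simp add: Jq_def Rep_PZ)
    then have "vec q (PZ q p) n n (2 * n) = 0" for n by (simp add: vec_def phi_J[OF _ q(1)])
    then have "coeff p n * gam q n = 0" for n using vec_PZ[OF q(1) q2(2) q2(1), of p n n "2 * n"] by simp
    then have "coeff p n = 0" for n using vecZ(2)[OF q(1) q2(2) q2(1), of n] by (metis mult_eq_0_iff)
    then show ?thesis by (intro poly_eqI) simp
  qed
  show ?thesis using P1 P2 P3 by blast
qed


end
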